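(* Let $B_J\in\mathbb R^{n\times n}$ satisfy $B_J\ge O$ elementwise and $\rho(B_J)>0$. Let $\mathcal B=(B_1,\dots,B_d)$ and $\mathcal B'=(B'_1,\dots,B'_{d+1})$ be splittings of $B_J$ of orders $d\ge1$ and $d+1$ (for $d=1$, $\mathcal B=(B_J)$), and suppose there exist integers $0\le r\le d-1$, $0\le s\le d$ such that, with $(C_1,\dots,C_d)=\mathcal S^r(\mathcal B)$ and $(C'_1,\dots,C'_{d+1})=\mathcal S^s(\mathcal B')$, (I) $C'_p=C_p$ for $p=1,\dots,d-1$ and (II) $(C'_d,C'_{d+1})$ is a splitting of $C_d$ (no assumption on $C'_{d+1}C'_d$). Then: (b1) if $\rho(B_J)<1$ then $\rho(T(\mathcal B'))\le\rho(T(\mathcal B))\le\rho(B_J)$; (b2) if $\rho(B_J)=1$ then $\rho(T(\mathcal B'))=\rho(T(\mathcal B))=1$; (b3) if $\rho(B_J)>1$ then $\rho(T(\mathcal B'))\ge\rho(T(\mathcal B))\ge\rho(B_J)$.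
   Context: For $B\in\mathbb R^{n\times n}$, a splitting of $B$ of order $d\ge1$ is an ordered $d$-tuple $\mathcal B=(B_1,\dots,B_d)$ of real $n\times n$ matrices with $B_p\neq O$ for all $p$, $\sum_{p=1}^d B_p=B$, and $B_p\circ B_q=O$ (Hadamard product) for $p\ne q$. The iteration matrix of $\mathcal B$ is the $dn\times dn$ matrix $T(\mathcal B)=(I_{dn}-\mathcal L)^{-1}\mathcal U$, where $\mathcal L,\mathcal U$ are $d\times d$ block matrices with $n\times n$ blocks, $\mathcal L_{ij}=B_j$ if $i>j$ and $O$ otherwise, $\mathcal U_{ij}=B_j$ if $i\le j$ and $O$ otherwise (so $T((B_J))=B_J$). The cyclic shift is $\mathcal S(B_1,\dots,B_d)=(B_d,B_1,\dots,B_{d-1})$ and $\mathcal S^r$ is its $r$-fold iterate. $\rho$ denotes spectral radius. *)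

theory Defs
  imports "Jordan_Normal_Form.Spectral_Radius" "Jordan_Normal_Form.Gauss_Jordan_Elimination"
begin

text \<open>Matrices are JNF matrices of type real mat with explicit dimensions.
  An ordered d-tuple of n x n matrices is a list of length d (0-indexed).\<close>

definition mat_sum_list :: "nat \<Rightarrow> real mat list \<Rightarrow> real mat" where
  "mat_sum_list n Bs = foldr (+) Bs (0\<^sub>m n n)"

definition is_splitting :: "nat \<Rightarrow> nat \<Rightarrow> real mat \<Rightarrow> real mat list \<Rightarrow> bool" where
  "is_splitting n d B Bs \<longleftrightarrow>
     d \<ge> 1 \<and> length Bs = d \<and>
     (\<forall>p<d. Bs ! p \<in> carrier_mat n n \<and> Bs ! p \<noteq> 0\<^sub>m n n) \<and>
     mat_sum_list n Bs = B \<and>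
     (\<forall>p<d. \<forall>q<d. p \<noteq> q \<longrightarrow>
        (\<forall>i<n. \<forall>j<n. (Bs ! p) $$ (i, j) * (Bs ! q) $$ (i, j) = 0))"

definition block_L :: "nat \<Rightarrow> real mat list \<Rightarrow> real mat" where
  "block_L n Bs = (let d = length Bs in
     mat (d * n) (d * n) (\<lambda>(i, j).
       if i div n > j div n then (Bs ! (j div n)) $$ (i mod n, j mod n) else 0))"

definition block_U :: "nat \<Rightarrow> real mat list \<Rightarrow> real mat" where
  "block_U n Bs = (let d = length Bs in
     mat (d * n) (d * n) (\<lambda>(i, j).
       if i div n \<le> j div n then (Bs ! (j div n)) $$ (i mod n, j mod n) else 0))"

definition iteration_matrix :: "nat \<Rightarrow> real mat list \<Rightarrow> real mat" where
  "iteration_matrix n Bs = (let d = length Bs in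
     the (mat_inverse (1\<^sub>m (d * n) - block_L n Bs)) * block_U n Bs)"

definition real_spectral_radius :: "real mat \<Rightarrow> real" where
  "real_spectral_radius A = spectral_radius (map_mat complex_of_real A)"

definition cyc_shift :: "'a list \<Rightarrow> 'a list" where
  "cyc_shift xs = (if xs = [] then [] else last xs # butlast xs)"

definition nonneg_mat :: "real mat \<Rightarrow> bool" where
  "nonneg_mat A \<longleftrightarrow> (\<forall>i<dim_row A. \<forall>j<dim_col A. A $$ (i, j) \<ge> 0)"

end

theory Submission
  imports Defs
begin


definition mvf :: "real mat \<Rightarrow> (nat \<Rightarrow> real) \<Rightarrow> nat \<Rightarrow> real" where
  "mvf M x i = (\<Sum>j<dim_col M. M $$ (i, j) * x j)"

lemma eig_bound_real:
  assumes A: "A \<in> carrier_mat N N" and i0: "i0 < N" "v i0 \<noteq> 0"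
    and ev: "\<And>i. i < N \<Longrightarrow> mvf A v i = \<mu> * v i"
  shows "\<bar>\<mu>\<bar> \<le> real_spectral_radius A"
proof -
  let ?CA = "map_mat complex_of_real A"
  let ?cv = "vec N (\<lambda>i. complex_of_real (v i))"
  have CA: "?CA \<in> carrier_mat N N" using A by auto
  have "?CA *\<^sub>v ?cv = complex_of_real \<mu> \<cdot>\<^sub>v ?cv"
  proof (rule eq_vecI)
    fix i assume "i < dim_vec (complex_of_real \<mu> \<cdot>\<^sub>v ?cv)"
    hence i: "i < N" by auto
    have "(?CA *\<^sub>v ?cv) $ i = (\<Sum>j = 0..<N. complex_of_real (A $$ (i,j)) * complex_of_real (v j))"
      using A i by (auto simp: scalar_prod_def intro!: sum.cong)
    also have "\<dots> = complex_of_real (mvf A v i)" using A unfolding mvf_def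
      by (simp add: atLeast0LessThan)
    also have "\<dots> = complex_of_real \<mu> * complex_of_real (v i)" using ev[OF i] by simp
    finally show "(?CA *\<^sub>v ?cv) $ i = (complex_of_real \<mu> \<cdot>\<^sub>v ?cv) $ i" using i by simp
  qed (use A in auto)
  moreover have "?cv \<noteq> 0\<^sub>v N"
  proof
    assume "?cv = 0\<^sub>v N"
    hence "?cv $ i0 = 0\<^sub>v N $ i0" by simp
    thus False using i0 by simp
  qed
  ultimately have "eigenvector ?CA ?cv (complex_of_real \<mu>)" unfolding eigenvector_def using A by auto
  hence "complex_of_real \<mu> \<in> spectrum ?CA" unfolding spectrum_def eigenvalue_def by auto
  hence "cmod (complex_of_real \<mu>) \<le> spectral_radius ?CA"
    by (intro spectral_radius_mem_max(2)[OF CA _ imageI]) (use i0 in auto)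
  thus ?thesis unfolding real_spectral_radius_def by simp
qed

lemma eig_entries:
  assumes CA: "CA \<in> carrier_mat N N" and ev: "eigenvector CA v \<mu>"
  shows "v \<in> carrier_vec N" "\<exists>i<N. v $ i \<noteq> 0"
    "\<And>i. i < N \<Longrightarrow> (\<Sum>j<N. CA $$ (i,j) * v $ j) = \<mu> * v $ i"
proof -
  show v: "v \<in> carrier_vec N" using ev CA unfolding eigenvector_def by auto
  show "\<exists>i<N. v $ i \<noteq> 0"
  proof (rule ccontr)
    assume "\<not> ?thesis"
    hence "v = 0\<^sub>v N" using v by (intro eq_vecI) auto
    thus False using ev CA unfolding eigenvector_def by auto
  qed
  fix i assume i: "i < N"
  have "(CA *\<^sub>v v) $ i = (\<mu> \<cdot>\<^sub>v v) $ i" using ev unfolding eigenvector_def by auto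
  thus "(\<Sum>j<N. CA $$ (i,j) * v $ j) = \<mu> * v $ i"
    using i CA v by (auto simp: scalar_prod_def atLeast0LessThan)
qed

lemma rho_nonneg: assumes A: "A \<in> carrier_mat N N" and N: "N > 0"
  shows "real_spectral_radius A \<ge> 0"
proof -
  have CA: "map_mat complex_of_real A \<in> carrier_mat N N" using A by auto
  from spectral_radius_mem_max(1)[OF CA N] show ?thesis unfolding real_spectral_radius_def by auto
qed

lemma rho_scale_lt1:
  assumes A: "A \<in> carrier_mat N N" and N: "N > 0" and c: "real_spectral_radius A < c"
  shows "spectral_radius (map_mat complex_of_real ((1/c) \<cdot>\<^sub>m A)) < 1"
proof -
  have cpos: "c > 0" using rho_nonneg[OF A N] c by auto
  let ?CB = "map_mat complex_of_real ((1/c) \<cdot>\<^sub>m A)"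
  have CB: "?CB \<in> carrier_mat N N" using A by auto
  from spectral_radius_mem_max(1)[OF CB N] obtain \<mu> where mu: "\<mu> \<in> spectrum ?CB"
    and eq: "spectral_radius ?CB = cmod \<mu>" by auto
  from mu obtain v where ev: "eigenvector ?CB v \<mu>" unfolding spectrum_def eigenvalue_def by auto
  note e = eig_entries[OF CB ev]
  let ?CA = "map_mat complex_of_real A"
  have CA: "?CA \<in> carrier_mat N N" using A by auto
  have "?CA *\<^sub>v v = (complex_of_real c * \<mu>) \<cdot>\<^sub>v v"
  proof (rule eq_vecI)
    fix i assume "i < dim_vec ((complex_of_real c * \<mu>) \<cdot>\<^sub>v v)"
    hence i: "i < N" using e(1) by auto
    have "(?CA *\<^sub>v v) $ i = (\<Sum>j<N. ?CA $$ (i,j) * v $ j)"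
      using i A e(1) by (auto simp: scalar_prod_def atLeast0LessThan)
    also have "\<dots> = complex_of_real c * (\<Sum>j<N. ?CB $$ (i,j) * v $ j)"
      unfolding sum_distrib_left using A i cpos by (auto intro!: sum.cong)
    also have "\<dots> = ((complex_of_real c * \<mu>) \<cdot>\<^sub>v v) $ i" using e(3)[OF i] i e(1) by auto
    finally show "(?CA *\<^sub>v v) $ i = ((complex_of_real c * \<mu>) \<cdot>\<^sub>v v) $ i" .
  qed (use A e(1) in auto)
  hence "eigenvector ?CA v (complex_of_real c * \<mu>)" using ev A unfolding eigenvector_def by auto
  hence "complex_of_real c * \<mu> \<in> spectrum ?CA" unfolding spectrum_def eigenvalue_def by auto
  hence "cmod (complex_of_real c * \<mu>) \<le> spectral_radius ?CA"
    using spectral_radius_mem_max(2)[OF CA N imageI] by auto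
  hence "c * cmod \<mu> \<le> spectral_radius ?CA" using cpos by (simp add: norm_mult)
  hence "c * cmod \<mu> < c * 1" using c unfolding real_spectral_radius_def by linarith
  hence "cmod \<mu> < 1" using cpos mult_less_cancel_left_pos by blast
  thus ?thesis using eq cpos by auto
qed



lemma mvf_mult: assumes A: "A \<in> carrier_mat n m" and B: "B \<in> carrier_mat m p" and i: "i < n"
  shows "mvf (A * B) w i = mvf A (mvf B w) i"
proof -
  have "mvf (A * B) w i = (\<Sum>j<p. (\<Sum>k<m. A $$ (i,k) * B $$ (k,j)) * w j)"
    unfolding mvf_def using A B i by (auto simp: scalar_prod_def atLeast0LessThan intro!: sum.cong)
  also have "\<dots> = (\<Sum>k<m. A $$ (i,k) * (\<Sum>j<p. B $$ (k,j) * w j))"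
    by (simp add: sum_distrib_left sum_distrib_right mult.assoc sum.swap[of _ "{..<p}"])
  also have "\<dots> = mvf A (mvf B w) i" unfolding mvf_def using A B by simp
  finally show ?thesis .
qed

lemma mvf_one: assumes i: "i < N" shows "mvf (1\<^sub>m N) w i = w i"
proof -
  have "mvf (1\<^sub>m N) w i = (\<Sum>j<N. if j = i then w j else 0)"
    unfolding mvf_def using i by (intro sum.cong) auto
  thus ?thesis using i by simp
qed

lemma nonneg_pow: assumes A: "A \<in> carrier_mat N N" and nn: "nonneg_mat A"
  shows "nonneg_mat (A ^\<^sub>m k)"
proof (induct k)
  case 0 thus ?case using A unfolding nonneg_mat_def by auto
next
  case (Suc k)
  have P: "A ^\<^sub>m k \<in> carrier_mat N N" using A by auto
  show ?case unfolding nonneg_mat_def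
  proof (intro allI impI)
    fix i j assume i: "i < dim_row (A ^\<^sub>m Suc k)" and j: "j < dim_col (A ^\<^sub>m Suc k)"
    hence ij: "i < N" "j < N" using A by auto
    have "(A ^\<^sub>m Suc k) $$ (i,j) = (\<Sum>l = 0..<N. (A ^\<^sub>m k) $$ (i,l) * A $$ (l,j))"
      using ij A P by (simp add: scalar_prod_def)
    also have "\<dots> \<ge> 0" using Suc nn ij A P unfolding nonneg_mat_def
      by (intro sum_nonneg mult_nonneg_nonneg) auto
    finally show "(A ^\<^sub>m Suc k) $$ (i,j) \<ge> 0" .
  qed
qed

lemma pow_smult: fixes A :: "real mat" assumes A: "A \<in> carrier_mat N N"
  shows "(a \<cdot>\<^sub>m A) ^\<^sub>m k = (a ^ k) \<cdot>\<^sub>m (A ^\<^sub>m k)"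
proof (induct k)
  case 0 thus ?case using A by (auto intro!: eq_matI)
next
  case (Suc k)
  have P: "A ^\<^sub>m k \<in> carrier_mat N N" using A by auto
  have "(a \<cdot>\<^sub>m A) ^\<^sub>m Suc k = ((a ^ k) \<cdot>\<^sub>m (A ^\<^sub>m k)) * (a \<cdot>\<^sub>m A)" using Suc by simp
  also have "\<dots> = (a ^ k) \<cdot>\<^sub>m (a \<cdot>\<^sub>m ((A ^\<^sub>m k) * A))"
    using mult_smult_assoc_mat[OF P smult_carrier_mat[OF A]] mult_smult_distrib[OF P A] A by auto
  also have "\<dots> = (a ^ Suc k) \<cdot>\<^sub>m (A ^\<^sub>m Suc k)" by (auto intro!: eq_matI)
  finally show ?case .
qed

lemma charI:
  assumes A: "A \<in> carrier_mat N N" and nn: "nonneg_mat A" and N: "N > 0"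
    and xpos: "\<And>i. i < N \<Longrightarrow> x i > 0"
    and ineq: "\<And>i. i < N \<Longrightarrow> mvf A x i < c * x i"
  shows "real_spectral_radius A < c"
proof -
  let ?CA = "map_mat complex_of_real A"
  have CA: "?CA \<in> carrier_mat N N" using A by auto
  from spectral_radius_mem_max(1)[OF CA N] obtain \<mu> where mu: "\<mu> \<in> spectrum ?CA"
    and eq: "spectral_radius ?CA = cmod \<mu>" by auto
  from mu obtain v where ev: "eigenvector ?CA v \<mu>" unfolding spectrum_def eigenvalue_def by auto
  note e = eig_entries[OF CA ev]
  define f where "f i = cmod (v $ i) / x i" for i
  define m where "m = Max (f ` {..<N})"
  have fin: "finite (f ` {..<N})" by auto
  have ne: "f ` {..<N} \<noteq> {}" using N by auto
  obtain i0 where i0: "i0 < N" "f i0 = m" using Max_in[OF fin ne] unfolding m_def by auto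
  have fm: "\<And>j. j < N \<Longrightarrow> f j \<le> m" unfolding m_def using fin by auto
  from e(2) obtain i1 where i1: "i1 < N" "v $ i1 \<noteq> 0" by auto
  have "f i1 > 0" using i1 xpos[OF i1(1)] unfolding f_def by auto
  hence mpos: "m > 0" using fm[OF i1(1)] by auto
  have vb: "\<And>j. j < N \<Longrightarrow> cmod (v $ j) \<le> m * x j"
    using fm xpos unfolding f_def by (simp add: divide_le_eq)
  have v0: "cmod (v $ i0) = m * x i0" using i0 xpos[OF i0(1)] unfolding f_def by auto
  have "cmod \<mu> * cmod (v $ i0) = cmod (\<Sum>j<N. ?CA $$ (i0,j) * v $ j)"
    using e(3)[OF i0(1)] by (simp add: norm_mult)
  also have "\<dots> \<le> (\<Sum>j<N. cmod (?CA $$ (i0,j) * v $ j))" by (rule norm_sum)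
  also have "\<dots> = (\<Sum>j<N. A $$ (i0,j) * cmod (v $ j))"
    using A i0 nn unfolding nonneg_mat_def by (intro sum.cong) (auto simp: norm_mult)
  also have "\<dots> \<le> (\<Sum>j<N. A $$ (i0,j) * (m * x j))"
    using A i0 nn vb unfolding nonneg_mat_def by (intro sum_mono mult_left_mono) auto
  also have "\<dots> = m * mvf A x i0" unfolding mvf_def using A
    by (simp add: sum_distrib_left mult_ac)
  also have "\<dots> < m * (c * x i0)" using ineq[OF i0(1)] mpos by simp
  also have "\<dots> = c * cmod (v $ i0)" using v0 by simp
  finally have "cmod \<mu> * cmod (v $ i0) < c * cmod (v $ i0)" .
  moreover have "cmod (v $ i0) > 0" using v0 mpos xpos[OF i0(1)] by simp
  ultimately have "cmod \<mu> < c" by simp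
  thus ?thesis using eq unfolding real_spectral_radius_def by simp
qed



lemma NS:
  assumes A: "A \<in> carrier_mat N N" and nn: "nonneg_mat A" and N: "N > 0"
    and rho: "real_spectral_radius A < c"
    and w: "\<And>i. i < N \<Longrightarrow> w i \<ge> 0"
  shows "\<exists>x. (\<forall>i<N. c * x i - mvf A x i = w i) \<and> (\<forall>i<N. x i \<ge> w i / c)"
proof -
  have cpos: "c > 0" using rho_nonneg[OF A N] rho by auto
  define D where "D = c \<cdot>\<^sub>m 1\<^sub>m N - A"
  have D: "D \<in> carrier_mat N N" unfolding D_def using A by auto
  have Dent: "\<And>i y. i < N \<Longrightarrow> mvf D y i = c * y i - mvf A y i"
  proof -
    fix i y assume i: "i < N"
    have "mvf D y i = (\<Sum>j<N. (if j = i then c * y j else 0) - A $$ (i,j) * y j)"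
      unfolding mvf_def D_def using A i by (intro sum.cong) (auto simp: algebra_simps)
    also have "\<dots> = c * y i - mvf A y i" unfolding mvf_def sum_subtractf using A i by simp
    finally show "mvf D y i = c * y i - mvf A y i" .
  qed
  have "det D \<noteq> 0"
  proof
    assume "det D = 0"
    from this[unfolded det_0_iff_vec_prod_zero[OF D]] obtain v where
      v: "v \<in> carrier_vec N" "v \<noteq> 0\<^sub>v N" "D *\<^sub>v v = 0\<^sub>v N" by auto
    obtain i0 where i0: "i0 < N" "v $ i0 \<noteq> 0"
    proof (rule ccontr)
      assume "\<not> thesis"
      hence "v = 0\<^sub>v N" using v(1) that by (intro eq_vecI) auto
      with v(2) show False by simp
    qed
    have "\<And>i. i < N \<Longrightarrow> mvf A (\<lambda>j. v $ j) i = c * v $ i"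
    proof -
      fix i assume i: "i < N"
      have "(D *\<^sub>v v) $ i = 0" using v(3) i by simp
      moreover have "(D *\<^sub>v v) $ i = mvf D (\<lambda>j. v $ j) i"
        using D i v(1) by (simp add: mvf_def scalar_prod_def atLeast0LessThan)
      ultimately show "mvf A (\<lambda>j. v $ j) i = c * v $ i" using Dent[OF i] by simp
    qed
    from eig_bound_real[OF A i0 this] rho cpos show False by simp
  qed
  from det_non_zero_imp_unit[OF D this, of "()"] obtain B where
    B: "B \<in> carrier_mat N N" "D * B = 1\<^sub>m N"
    unfolding Units_def by (auto simp: ring_mat_def)
  define x where "x = mvf B w"
  have eq: "\<And>i. i < N \<Longrightarrow> c * x i - mvf A x i = w i"
    using Dent mvf_mult[OF D B(1)] B(2) mvf_one unfolding x_def by metis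
  define R where "R = (1/c) \<cdot>\<^sub>m A"
  have R: "R \<in> carrier_mat N N" unfolding R_def using A by auto
  have Rnn: "nonneg_mat R" using nn cpos A unfolding R_def nonneg_mat_def by auto
  have Rx: "\<And>i. i < N \<Longrightarrow> mvf R x i = x i - w i / c"
  proof -
    fix i assume i: "i < N"
    have "mvf R x i = mvf A x i / c" unfolding R_def mvf_def using A i
      by (simp add: sum_divide_distrib)
    thus "mvf R x i = x i - w i / c" using eq[OF i] cpos by (simp add: field_simps)
  qed
  define y where "y m i = mvf (R ^\<^sub>m m) x i" for m i
  have Rm: "\<And>m. R ^\<^sub>m m \<in> carrier_mat N N" using R by auto
  have ydec: "\<And>m i. i < N \<Longrightarrow> y (Suc m) i \<le> y m i"
  proof -
    fix m i assume i: "i < N"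
    have "y (Suc m) i = mvf (R ^\<^sub>m m) (mvf R x) i" unfolding y_def
      using mvf_mult[OF Rm R i] by simp
    also have "\<dots> = mvf (R ^\<^sub>m m) (\<lambda>j. x j - w j / c) i"
    proof -
      have dc: "dim_col (R ^\<^sub>m m) = N" using Rm[of m] by blast
      show ?thesis unfolding mvf_def[of "R ^\<^sub>m m"] dc using Rx by (intro sum.cong) auto
    qed
    also have "\<dots> = y m i - mvf (R ^\<^sub>m m) (\<lambda>j. w j / c) i"
      unfolding mvf_def y_def by (simp add: algebra_simps sum_subtractf)
    also have "\<dots> \<le> y m i"
    proof -
      have dc: "dim_col (R ^\<^sub>m m) = N" "dim_row (R ^\<^sub>m m) = N" using Rm[of m] by auto
      have nnp: "\<And>j. j < N \<Longrightarrow> 0 \<le> (R ^\<^sub>m m) $$ (i, j)"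
        using nonneg_pow[OF R Rnn, of m] i dc unfolding nonneg_mat_def by auto
      have "mvf (R ^\<^sub>m m) (\<lambda>j. w j / c) i \<ge> 0" unfolding mvf_def dc
        using nnp w cpos by (intro sum_nonneg mult_nonneg_nonneg) auto
      thus ?thesis by simp
    qed
    finally show "y (Suc m) i \<le> y m i" .
  qed
  have claim: "\<And>m i. i < N \<Longrightarrow> x i - y (Suc m) i \<ge> w i / c"
  proof -
    fix m i assume i: "i < N"
    show "x i - y (Suc m) i \<ge> w i / c"
    proof (induct m)
      case 0
      have "y 1 i = mvf R x i" unfolding y_def using R i
        by (simp add: mvf_def scalar_prod_def atLeast0LessThan)
      thus ?case using Rx[OF i] by simp
    next
      case (Suc m) thus ?case using ydec[OF i, of "Suc m"] by simp
    qed
  qed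
  define \<rho> where "\<rho> = real_spectral_radius A"
  define c' where "c' = (\<rho> + c) / 2"
  have c'lt: "\<rho> < c'" "c' < c" using rho unfolding c'_def \<rho>_def by auto
  have c'pos: "c' > 0" using rho_nonneg[OF A N] c'lt unfolding \<rho>_def by auto
  define A' where "A' = (1/c') \<cdot>\<^sub>m A"
  have A': "A' \<in> carrier_mat N N" unfolding A'_def using A by auto
  have "spectral_radius (map_mat complex_of_real A') < 1"
    unfolding A'_def by (rule rho_scale_lt1[OF A N]) (use c'lt in \<open>auto simp: \<rho>_def\<close>)
  from spectral_radius_jnf_norm_bound_less_1_upper_triangular[OF _ this] A'
  obtain K where K: "\<And>k. norm_bound ((map_mat complex_of_real A') ^\<^sub>m k) K" by auto
  have Kb: "\<And>k i j. i < N \<Longrightarrow> j < N \<Longrightarrow> \<bar>(A' ^\<^sub>m k) $$ (i,j)\<bar> \<le> K"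
  proof -
    fix k i j assume ij: "i < N" "j < N"
    have "map_mat complex_of_real (A' ^\<^sub>m k) = (map_mat complex_of_real A') ^\<^sub>m k"
      by (rule of_real_hom.mat_hom_pow[OF A'])
    moreover have "(map_mat complex_of_real A') ^\<^sub>m k \<in> carrier_mat N N" using A' by simp
    hence "dim_row ((map_mat complex_of_real A') ^\<^sub>m k) = N"
       "dim_col ((map_mat complex_of_real A') ^\<^sub>m k) = N" by auto
    ultimately have "cmod (map_mat complex_of_real (A' ^\<^sub>m k) $$ (i,j)) \<le> K"
      using K[of k] ij unfolding norm_bound_def by simp
    thus "\<bar>(A' ^\<^sub>m k) $$ (i,j)\<bar> \<le> K" using ij A' by simp
  qed
  define q where "q = c' / c"
  have q: "0 < q" "q < 1" unfolding q_def using c'pos c'lt cpos by auto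
  have RA': "R = q \<cdot>\<^sub>m A'" unfolding R_def A'_def q_def using cpos c'pos
    by (auto intro!: eq_matI)
  define S where "S = (\<Sum>j<N. \<bar>x j\<bar>)"
  have ybound: "\<And>m i. i < N \<Longrightarrow> \<bar>y m i\<bar> \<le> q ^ m * (K * S)"
  proof -
    fix m i assume i: "i < N"
    have dc: "dim_col (R ^\<^sub>m m) = N" using Rm[of m] by blast
    have "\<bar>y m i\<bar> \<le> (\<Sum>j<N. \<bar>(R ^\<^sub>m m) $$ (i,j) * x j\<bar>)"
      unfolding y_def mvf_def dc by (rule sum_abs)
    also have "\<dots> \<le> (\<Sum>j<N. q ^ m * K * \<bar>x j\<bar>)"
    proof (rule sum_mono)
      fix j assume j: "j \<in> {..<N}"
      have "(R ^\<^sub>m m) $$ (i,j) = q ^ m * (A' ^\<^sub>m m) $$ (i,j)"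
        unfolding RA' pow_smult[OF A'] using i j A' by simp
      hence "\<bar>(R ^\<^sub>m m) $$ (i,j)\<bar> \<le> q ^ m * K" using Kb[OF i, of j m] j q
        by (simp add: abs_mult mult_left_mono)
      thus "\<bar>(R ^\<^sub>m m) $$ (i,j) * x j\<bar> \<le> q ^ m * K * \<bar>x j\<bar>"
        by (simp add: abs_mult mult_right_mono)
    qed
    also have "\<dots> = q ^ m * (K * S)" unfolding S_def by (simp add: sum_distrib_left mult_ac)
    finally show "\<bar>y m i\<bar> \<le> q ^ m * (K * S)" .
  qed
  have "\<forall>i<N. x i \<ge> w i / c"
  proof (intro allI impI)
    fix i assume i: "i < N"
    show "x i \<ge> w i / c"
    proof (rule ccontr)
    assume nle: "\<not> w i / c \<le> x i"
    define \<epsilon> where "\<epsilon> = w i / c - x i"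
    have eps: "\<epsilon> > 0" using nle unfolding \<epsilon>_def by auto
    have KS: "K * S \<ge> 0" using ybound[OF i, of 0] by simp
    obtain m where m: "q ^ m < \<epsilon> / (K * S + 1)"
      using real_arch_pow_inv[of "\<epsilon> / (K * S + 1)" q] eps KS q by auto
    have kp: "K * S + 1 > 0" using KS by linarith
    have h1: "q ^ m * (K * S + 1) < \<epsilon>" using m kp by (simp add: less_divide_eq)
    have h2: "q ^ m * (K * S) \<le> q ^ m * (K * S + 1)" using q by (intro mult_left_mono) auto
    have h3: "q ^ Suc m * (K * S) \<le> q ^ m * (K * S)"
      using q KS by (intro mult_right_mono power_decreasing) auto
    have "q ^ Suc m * (K * S) < \<epsilon>" using h1 h2 h3 by linarith
    with ybound[OF i, of "Suc m"] have "\<bar>y (Suc m) i\<bar> < \<epsilon>" by simp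
    with claim[OF i, of m] show False unfolding \<epsilon>_def by auto
    qed
  qed
  with eq show ?thesis by blast
qed

lemma charD:
  assumes A: "A \<in> carrier_mat N N" and nn: "nonneg_mat A" and N: "N > 0"
    and rho: "real_spectral_radius A < c"
  shows "\<exists>x. (\<forall>i<N. x i > 0) \<and> (\<forall>i<N. mvf A x i < c * x i)"
proof -
  have cpos: "c > 0" using rho_nonneg[OF A N] rho by auto
  from NS[OF A nn N rho, of "\<lambda>_. 1"] obtain x where
    x: "\<forall>i<N. c * x i - mvf A x i = 1" "\<forall>i<N. x i \<ge> 1 / c" by auto
  have "\<forall>i<N. x i > 0" using x(2) cpos by (meson less_le_trans zero_less_divide_1_iff)
  moreover have "\<forall>i<N. mvf A x i < c * x i" using x(1) by (metis less_add_one diff_eq_eq add.commute)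
  ultimately show ?thesis by blast
qed



lemma mvf_lin: "mvf M (\<lambda>k. a * y k - z k) i = a * mvf M y i - mvf M z i"
  unfolding mvf_def by (simp add: algebra_simps sum_subtractf sum_distrib_left)

lemma tri:
  assumes L: "L \<in> carrier_mat N N" and nn: "nonneg_mat L"
    and up: "\<forall>i<N. \<forall>j<N. i \<le> j \<longrightarrow> L $$ (i,j) = 0"
    and eq: "\<forall>i<N. x i - mvf L x i = v i"
    and v: "\<forall>i<N. v i \<ge> 0"
  shows "\<forall>i<N. x i \<ge> v i"
proof (intro allI impI)
  fix i show "i < N \<Longrightarrow> x i \<ge> v i"
  proof (induct i rule: less_induct)
    case (less i)
    have "mvf L x i \<ge> 0" unfolding mvf_def using L
    proof (simp, intro sum_nonneg)
      fix j assume j: "j \<in> {..<N}"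
      show "L $$ (i,j) * x j \<ge> 0"
      proof (cases "i \<le> j")
        case True thus ?thesis using up less(2) j by simp
      next
        case False
        hence "x j \<ge> v j" using less(1)[of j] j by auto
        hence "x j \<ge> 0" using v j by force
        moreover have "L $$ (i,j) \<ge> 0" using nn L less(2) j unfolding nonneg_mat_def by auto
        ultimately show ?thesis by simp
      qed
    qed
    thus ?case using eq less(2) by force
  qed
qed

lemma sum_lessThan_plus: fixes m p :: nat shows "(\<Sum>k<m+p. f k) = (\<Sum>k<m. f k) + (\<Sum>b<p. f (m + b))"
  by (induct p) (simp_all add: add.assoc)

lemma sum_blocks: fixes d n :: nat shows "(\<Sum>k<d*n. f k) = (\<Sum>j<d. \<Sum>b<n. f (j*n + b))"
proof (induct d)
  case (Suc d)
  have "(\<Sum>k<Suc d * n. f k) = (\<Sum>k<d*n + n. f k)" by (simp add: add.commute)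
  also have "\<dots> = (\<Sum>k<d*n. f k) + (\<Sum>b<n. f (d*n + b))" by (rule sum_lessThan_plus)
  finally show ?case using Suc by simp
qed simp

definition good :: "nat \<Rightarrow> real \<Rightarrow> real mat list \<Rightarrow> bool" where
  "good n c Cs \<longleftrightarrow> (\<exists>ys. (\<forall>j<length Cs. \<forall>a<n. ys j a > 0) \<and>
     (\<forall>i<length Cs. \<forall>a<n. c * (\<Sum>j<i. mvf (Cs!j) (ys j) a)
        + (\<Sum>j\<in>{i..<length Cs}. mvf (Cs!j) (ys j) a) < c * ys i a))"

definition parts_ok :: "nat \<Rightarrow> real mat list \<Rightarrow> bool" where
  "parts_ok n Cs \<longleftrightarrow> (\<forall>C\<in>set Cs. C \<in> carrier_mat n n \<and> nonneg_mat C)"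

lemma idx_lt: assumes "i < d" "a < (n::nat)" shows "i*n+a < d*n"
proof -
  have "i*n + a < (i+1)*n" using assms by simp
  also have "\<dots> \<le> d*n" using assms by (intro mult_right_mono) auto
  finally show ?thesis .
qed

lemma block_facts:
  assumes n: "n > 0" and ok: "parts_ok n Cs"
  defines "d \<equiv> length Cs"
  shows "block_L n Cs \<in> carrier_mat (d*n) (d*n)" "block_U n Cs \<in> carrier_mat (d*n) (d*n)"
    "nonneg_mat (block_L n Cs)" "nonneg_mat (block_U n Cs)"
    "\<And>i j. i < d*n \<Longrightarrow> j < d*n \<Longrightarrow> i \<le> j \<Longrightarrow> block_L n Cs $$ (i,j) = 0"
    "\<And>y i a. i < d \<Longrightarrow> a < n \<Longrightarrow> mvf (block_L n Cs) y (i*n+a) =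
        (\<Sum>j<i. mvf (Cs!j) (\<lambda>b. y (j*n+b)) a)"
    "\<And>y i a. i < d \<Longrightarrow> a < n \<Longrightarrow> mvf (block_U n Cs) y (i*n+a) =
        (\<Sum>j\<in>{i..<d}. mvf (Cs!j) (\<lambda>b. y (j*n+b)) a)"
proof -
  show L: "block_L n Cs \<in> carrier_mat (d*n) (d*n)" unfolding block_L_def d_def Let_def by simp
  show U: "block_U n Cs \<in> carrier_mat (d*n) (d*n)" unfolding block_U_def d_def Let_def by simp
  have Ci: "\<And>k. k < d*n \<Longrightarrow> Cs ! (k div n) \<in> carrier_mat n n \<and> nonneg_mat (Cs ! (k div n))"
  proof -
    fix k assume "k < d*n"
    hence "k div n < d" using n by (simp add: less_mult_imp_div_less)
    thus "Cs ! (k div n) \<in> carrier_mat n n \<and> nonneg_mat (Cs ! (k div n))"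
      using ok unfolding parts_ok_def d_def by auto
  qed
  show "nonneg_mat (block_L n Cs)" unfolding nonneg_mat_def
  proof (intro allI impI)
    fix i j assume "i < dim_row (block_L n Cs)" "j < dim_col (block_L n Cs)"
    hence ij: "i < d*n" "j < d*n" using L by auto
    from Ci[OF ij(2)] n show "block_L n Cs $$ (i,j) \<ge> 0" using ij
      unfolding block_L_def d_def nonneg_mat_def Let_def by auto
  qed
  show "nonneg_mat (block_U n Cs)" unfolding nonneg_mat_def
  proof (intro allI impI)
    fix i j assume "i < dim_row (block_U n Cs)" "j < dim_col (block_U n Cs)"
    hence ij: "i < d*n" "j < d*n" using U by auto
    from Ci[OF ij(2)] n show "block_U n Cs $$ (i,j) \<ge> 0" using ij
      unfolding block_U_def d_def nonneg_mat_def Let_def by auto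
  qed
  show "\<And>i j. i < d*n \<Longrightarrow> j < d*n \<Longrightarrow> i \<le> j \<Longrightarrow> block_L n Cs $$ (i,j) = 0"
  proof -
    fix i j assume ij: "i < d*n" "j < d*n" "i \<le> j"
    hence "i div n \<le> j div n" by (simp add: div_le_mono)
    thus "block_L n Cs $$ (i,j) = 0" using ij unfolding block_L_def d_def Let_def by auto
  qed
  show "\<And>y i a. i < d \<Longrightarrow> a < n \<Longrightarrow> mvf (block_L n Cs) y (i*n+a) =
        (\<Sum>j<i. mvf (Cs!j) (\<lambda>b. y (j*n+b)) a)"
  proof -
    fix y i a assume i: "i < d" and a: "a < n"
    have ia: "i*n+a < d*n" using idx_lt[OF i a] .
    have "mvf (block_L n Cs) y (i*n+a) = (\<Sum>k<d*n. block_L n Cs $$ (i*n+a, k) * y k)"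
      unfolding mvf_def using L by simp
    also have "\<dots> = (\<Sum>j<d. \<Sum>b<n. block_L n Cs $$ (i*n+a, j*n+b) * y (j*n+b))"
      by (rule sum_blocks)
    also have "\<dots> = (\<Sum>j<d. if j < i then mvf (Cs!j) (\<lambda>b. y (j*n+b)) a else 0)"
    proof (rule sum.cong[OF refl])
      fix j assume j: "j \<in> {..<d}"
      have Cj: "Cs ! j \<in> carrier_mat n n" using ok j unfolding parts_ok_def d_def by auto
      have "\<And>b. b < n \<Longrightarrow> j*n+b < d*n" using j idx_lt by auto
      hence "(\<Sum>b<n. block_L n Cs $$ (i*n+a, j*n+b) * y (j*n+b)) =
        (\<Sum>b<n. (if j < i then (Cs ! j) $$ (a, b) else 0) * y (j*n+b))"
        using ia n a unfolding block_L_def d_def Let_def by (intro sum.cong) auto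
      also have "\<dots> = (if j < i then mvf (Cs!j) (\<lambda>b. y (j*n+b)) a else 0)"
        unfolding mvf_def using Cj by auto
      finally show "(\<Sum>b<n. block_L n Cs $$ (i*n+a, j*n+b) * y (j*n+b)) =
        (if j < i then mvf (Cs!j) (\<lambda>b. y (j*n+b)) a else 0)" .
    qed
    also have "\<dots> = (\<Sum>j\<in>{..<d} \<inter> {j. j < i}. mvf (Cs!j) (\<lambda>b. y (j*n+b)) a)"
      by (simp add: sum.inter_restrict)
    also have "{..<d} \<inter> {j. j < i} = {..<i}" using i by auto
    finally show "mvf (block_L n Cs) y (i*n+a) = (\<Sum>j<i. mvf (Cs!j) (\<lambda>b. y (j*n+b)) a)" .
  qed
  show "\<And>y i a. i < d \<Longrightarrow> a < n \<Longrightarrow> mvf (block_U n Cs) y (i*n+a) =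
        (\<Sum>j\<in>{i..<d}. mvf (Cs!j) (\<lambda>b. y (j*n+b)) a)"
  proof -
    fix y i a assume i: "i < d" and a: "a < n"
    have ia: "i*n+a < d*n" using idx_lt[OF i a] .
    have "mvf (block_U n Cs) y (i*n+a) = (\<Sum>k<d*n. block_U n Cs $$ (i*n+a, k) * y k)"
      unfolding mvf_def using U by simp
    also have "\<dots> = (\<Sum>j<d. \<Sum>b<n. block_U n Cs $$ (i*n+a, j*n+b) * y (j*n+b))"
      by (rule sum_blocks)
    also have "\<dots> = (\<Sum>j<d. if i \<le> j then mvf (Cs!j) (\<lambda>b. y (j*n+b)) a else 0)"
    proof (rule sum.cong[OF refl])
      fix j assume j: "j \<in> {..<d}"
      have Cj: "Cs ! j \<in> carrier_mat n n" using ok j unfolding parts_ok_def d_def by auto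
      have "\<And>b. b < n \<Longrightarrow> j*n+b < d*n" using j idx_lt by auto
      hence "(\<Sum>b<n. block_U n Cs $$ (i*n+a, j*n+b) * y (j*n+b)) =
        (\<Sum>b<n. (if i \<le> j then (Cs ! j) $$ (a, b) else 0) * y (j*n+b))"
        using ia n a unfolding block_U_def d_def Let_def by (intro sum.cong) auto
      also have "\<dots> = (if i \<le> j then mvf (Cs!j) (\<lambda>b. y (j*n+b)) a else 0)"
        unfolding mvf_def using Cj by auto
      finally show "(\<Sum>b<n. block_U n Cs $$ (i*n+a, j*n+b) * y (j*n+b)) =
        (if i \<le> j then mvf (Cs!j) (\<lambda>b. y (j*n+b)) a else 0)" .
    qed
    also have "\<dots> = (\<Sum>j\<in>{..<d} \<inter> {j. i \<le> j}. mvf (Cs!j) (\<lambda>b. y (j*n+b)) a)"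
      by (simp add: sum.inter_restrict)
    also have "{..<d} \<inter> {j. i \<le> j} = {i..<d}" by auto
    finally show "mvf (block_U n Cs) y (i*n+a) = (\<Sum>j\<in>{i..<d}. mvf (Cs!j) (\<lambda>b. y (j*n+b)) a)" .
  qed
qed



lemma mvf_P: assumes L: "L \<in> carrier_mat N N" and i: "i < N"
  shows "mvf (1\<^sub>m N - L) y i = y i - mvf L y i"
proof -
  have "mvf (1\<^sub>m N - L) y i = (\<Sum>j<N. (if j = i then y j else 0) - L $$ (i,j) * y j)"
    unfolding mvf_def using L i by (intro sum.cong) (auto simp: algebra_simps)
  also have "\<dots> = y i - mvf L y i" unfolding mvf_def sum_subtractf using L i by simp
  finally show ?thesis .
qed

lemma TC_setup:
  assumes n: "n > 0" and ok: "parts_ok n Cs" and d: "length Cs \<ge> 1"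
  defines "N \<equiv> length Cs * n"
  defines "L \<equiv> block_L n Cs" and "U \<equiv> block_U n Cs"
  shows "\<exists>Q. Q \<in> carrier_mat N N \<and> (1\<^sub>m N - L) * Q = 1\<^sub>m N \<and> Q * (1\<^sub>m N - L) = 1\<^sub>m N
     \<and> nonneg_mat Q \<and> iteration_matrix n Cs = Q * U"
proof -
  note bf = block_facts[OF n ok]
  have L: "L \<in> carrier_mat N N" and U: "U \<in> carrier_mat N N"
    and Lnn: "nonneg_mat L" and Lup: "\<And>i j. i < N \<Longrightarrow> j < N \<Longrightarrow> i \<le> j \<Longrightarrow> L $$ (i,j) = 0"
    using bf unfolding N_def L_def U_def by auto
  define P where "P = 1\<^sub>m N - L"
  have P: "P \<in> carrier_mat N N" unfolding P_def using L by auto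
  have LupA: "\<forall>i<N. \<forall>j<N. i \<le> j \<longrightarrow> L $$ (i,j) = 0" using Lup by auto
  have Pent: "\<And>y i. i < N \<Longrightarrow> mvf P y i = y i - mvf L y i" unfolding P_def by (rule mvf_P[OF L])
  have "det P \<noteq> 0"
  proof
    assume "det P = 0"
    from this[unfolded det_0_iff_vec_prod_zero[OF P]] obtain v where
      v: "v \<in> carrier_vec N" "v \<noteq> 0\<^sub>v N" "P *\<^sub>v v = 0\<^sub>v N" by auto
    have Pv: "\<And>i. i < N \<Longrightarrow> mvf P (\<lambda>j. v $ j) i = 0"
    proof -
      fix i assume i: "i < N"
      have "(P *\<^sub>v v) $ i = 0" using v(3) i by simp
      moreover have "(P *\<^sub>v v) $ i = mvf P (\<lambda>j. v $ j) i"
        using P i v(1) by (simp add: mvf_def scalar_prod_def atLeast0LessThan)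
      ultimately show "mvf P (\<lambda>j. v $ j) i = 0" by simp
    qed
    have ge: "\<And>i. i < N \<Longrightarrow> v $ i \<ge> 0"
      using tri[OF L Lnn LupA, where x="\<lambda>j. v $ j" and v="\<lambda>_. 0"] Pv Pent by auto
    have h: "\<And>i. i < N \<Longrightarrow> (- v $ i) - mvf L (\<lambda>j. - v $ j) i = 0"
    proof -
      fix i assume i: "i < N"
      have "mvf L (\<lambda>j. - v $ j) i = - mvf L (\<lambda>j. v $ j) i" unfolding mvf_def
        by (simp add: sum_negf)
      thus "(- v $ i) - mvf L (\<lambda>j. - v $ j) i = 0" using Pv[OF i] Pent[OF i] by simp
    qed
    have h': "\<forall>i<N. (\<lambda>j. - v $ j) i - mvf L (\<lambda>j. - v $ j) i = (\<lambda>_. 0::real) i" using h by simp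
    have "\<forall>i<N. (\<lambda>j. - v $ j) i \<ge> (\<lambda>_. 0::real) i" by (rule tri[OF L Lnn LupA h']) simp
    hence le: "\<And>i. i < N \<Longrightarrow> - v $ i \<ge> 0" by simp
    have "v = 0\<^sub>v N" using v(1) ge le by (intro eq_vecI) (auto, smt (verit))
    with v(2) show False by simp
  qed
  from det_non_zero_imp_unit[OF P this, of "()"] have unit: "P \<in> Units (ring_mat TYPE(real) N ())" .
  obtain Q where Qd: "mat_inverse P = Some Q"
  proof (cases "mat_inverse P")
    case None with mat_inverse(1)[OF P None, of "()"] unit show ?thesis by blast
  qed auto
  from mat_inverse(2)[OF P Qd] have Q: "P * Q = 1\<^sub>m N" "Q * P = 1\<^sub>m N" "Q \<in> carrier_mat N N" by auto
  have Qnn: "nonneg_mat Q" unfolding nonneg_mat_def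
  proof (intro allI impI)
    fix i j assume "i < dim_row Q" "j < dim_col Q"
    hence ij: "i < N" "j < N" using Q(3) by auto
    have "\<And>k. k < N \<Longrightarrow> Q $$ (k,j) - mvf L (\<lambda>k. Q $$ (k,j)) k = (if k = j then 1 else 0)"
    proof -
      fix k assume k: "k < N"
      have "(P * Q) $$ (k,j) = mvf P (\<lambda>k. Q $$ (k,j)) k"
        using P Q(3) k ij by (simp add: mvf_def scalar_prod_def atLeast0LessThan)
      thus "Q $$ (k,j) - mvf L (\<lambda>k. Q $$ (k,j)) k = (if k = j then 1 else 0)"
        using Q(1) Pent[OF k] k ij by simp
    qed
    with tri[OF L Lnn LupA, where x="\<lambda>k. Q $$ (k,j)" and v="\<lambda>k. if k = j then 1 else 0"] ij
    have "Q $$ (i,j) \<ge> (if i = j then 1 else 0)" by auto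
    thus "Q $$ (i,j) \<ge> 0" by (smt (verit))
  qed
  have "iteration_matrix n Cs = Q * U"
    unfolding iteration_matrix_def Let_def N_def[symmetric] L_def[symmetric] U_def[symmetric]
      P_def[symmetric] Qd by simp
  thus ?thesis using Q Qnn unfolding P_def by auto
qed



lemma mvf_cong: "(\<And>b. b < dim_col M \<Longrightarrow> f b = g b) \<Longrightarrow> mvf M f i = mvf M g i"
  unfolding mvf_def by (intro sum.cong) auto

lemma nonneg_mult: assumes A: "A \<in> carrier_mat n m" and B: "B \<in> carrier_mat m p"
  and "nonneg_mat A" "nonneg_mat B" shows "nonneg_mat (A * B)"
  unfolding nonneg_mat_def
proof (intro allI impI)
  fix i j assume "i < dim_row (A * B)" "j < dim_col (A * B)"
  hence ij: "i < n" "j < p" using A B by auto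
  have "(A * B) $$ (i,j) = (\<Sum>k = 0..<m. A $$ (i,k) * B $$ (k,j))"
    using A B ij by (simp add: scalar_prod_def)
  also have "\<dots> \<ge> 0" using assms ij unfolding nonneg_mat_def by (intro sum_nonneg mult_nonneg_nonneg) auto
  finally show "(A * B) $$ (i,j) \<ge> 0" .
qed

lemma TC:
  assumes n: "n > 0" and ok: "parts_ok n Cs" and d: "length Cs \<ge> 1" and c: "c > 0"
  shows "real_spectral_radius (iteration_matrix n Cs) < c \<longleftrightarrow> good n c Cs"
proof -
  define d where "d = length Cs"
  define N where "N = d * n"
  define L where "L = block_L n Cs"
  define U where "U = block_U n Cs"
  note bf = block_facts[OF n ok]
  have L: "L \<in> carrier_mat N N" and U: "U \<in> carrier_mat N N"
    and Lnn: "nonneg_mat L" and Unn: "nonneg_mat U"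
    and Lup: "\<And>i j. i < N \<Longrightarrow> j < N \<Longrightarrow> i \<le> j \<Longrightarrow> L $$ (i,j) = 0"
    using bf unfolding N_def L_def U_def d_def by auto
  have Lb: "\<And>y i a. i < d \<Longrightarrow> a < n \<Longrightarrow> mvf L y (i*n+a) = (\<Sum>j<i. mvf (Cs!j) (\<lambda>b. y (j*n+b)) a)"
    and Ub: "\<And>y i a. i < d \<Longrightarrow> a < n \<Longrightarrow> mvf U y (i*n+a) = (\<Sum>j\<in>{i..<d}. mvf (Cs!j) (\<lambda>b. y (j*n+b)) a)"
    using bf unfolding L_def U_def d_def by auto
  obtain Q where Q: "Q \<in> carrier_mat N N" "(1\<^sub>m N - L) * Q = 1\<^sub>m N" "Q * (1\<^sub>m N - L) = 1\<^sub>m N"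
     "nonneg_mat Q" "iteration_matrix n Cs = Q * U"
    using TC_setup[OF n ok d] unfolding N_def L_def U_def d_def by blast
  define P where "P = 1\<^sub>m N - L"
  define T where "T = Q * U"
  have P: "P \<in> carrier_mat N N" unfolding P_def using L by auto
  have T: "T \<in> carrier_mat N N" unfolding T_def using Q U by auto
  have Tnn: "nonneg_mat T" unfolding T_def by (rule nonneg_mult[OF Q(1) U Q(4) Unn])
  have LupA: "\<forall>i<N. \<forall>j<N. i \<le> j \<longrightarrow> L $$ (i,j) = 0" using Lup by auto
  have Npos: "N > 0" unfolding N_def d_def using n d by auto
  have Pent: "\<And>y i. i < N \<Longrightarrow> mvf P y i = y i - mvf L y i" unfolding P_def by (rule mvf_P[OF L])
  have PT: "\<And>y k. k < N \<Longrightarrow> mvf P (mvf T y) k = mvf U y k"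
  proof -
    fix y k assume k: "k < N"
    have "P * T = (P * Q) * U" unfolding T_def using P Q(1) U by (simp add: assoc_mult_mat)
    also have "\<dots> = U" using Q(2) U unfolding P_def by simp
    finally show "mvf P (mvf T y) k = mvf U y k" using mvf_mult[OF P T k] by simp
  qed
  have blk: "\<And>y i a. i < d \<Longrightarrow> a < n \<Longrightarrow> c * mvf P y (i*n+a) - mvf U y (i*n+a) =
      c * y (i*n+a) - (c * (\<Sum>j<i. mvf (Cs!j) (\<lambda>b. y (j*n+b)) a)
        + (\<Sum>j\<in>{i..<d}. mvf (Cs!j) (\<lambda>b. y (j*n+b)) a))"
  proof -
    fix y i a assume i: "i < d" and a: "a < n"
    have "i*n+a < N" unfolding N_def using idx_lt[OF i a] .
    from Pent[OF this, of y] have e: "mvf P y (i*n+a) = y (i*n+a) - (\<Sum>j<i. mvf (Cs!j) (\<lambda>b. y (j*n+b)) a)"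
      unfolding Lb[OF i a] .
    show "?thesis y i a" by (simp only: e Ub[OF i a]) (simp add: algebra_simps)
  qed
  have Cdim: "\<And>j. j < d \<Longrightarrow> dim_col (Cs ! j) = n" using ok unfolding parts_ok_def d_def by auto
  have kdec: "\<And>k. k < N \<Longrightarrow> k div n < d \<and> k mod n < n \<and> k = (k div n) * n + k mod n"
    using n unfolding N_def by (auto simp: less_mult_imp_div_less)
  have T_eq: "iteration_matrix n Cs = T" using Q(5) unfolding T_def by simp
  show ?thesis unfolding T_eq
  proof
    assume "real_spectral_radius T < c"
    define w where "w = mvf Q (\<lambda>_. 1)"
    have "\<And>k. k < N \<Longrightarrow> w k - mvf L w k = 1"
    proof -
      fix k assume k: "k < N"
      have "mvf P w k = mvf (P * Q) (\<lambda>_. 1) k" unfolding w_def using mvf_mult[OF P Q(1) k] by simp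
      also have "\<dots> = 1" using Q(2) mvf_one[OF k] unfolding P_def by simp
      finally show "w k - mvf L w k = 1" using Pent[OF k] by simp
    qed
    with tri[OF L Lnn LupA, where x=w and v="\<lambda>_. 1"] have w1: "\<And>k. k < N \<Longrightarrow> w k \<ge> 1" by auto
    from NS[OF T Tnn Npos \<open>real_spectral_radius T < c\<close>, of w] w1
    obtain x where x: "\<forall>i<N. c * x i - mvf T x i = w i" "\<forall>i<N. x i \<ge> w i / c"
      by (meson dual_order.trans zero_le_one)
    have xpos: "\<And>k. k < N \<Longrightarrow> x k > 0"
    proof -
      fix k assume k: "k < N"
      have "w k / c > 0" using w1[OF k] c by auto
      thus "x k > 0" using x(2) k by (meson less_le_trans)
    qed
    have key: "\<And>k. k < N \<Longrightarrow> c * mvf P x k - mvf U x k = 1"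
    proof -
      fix k assume k: "k < N"
      have "c * mvf P x k - mvf U x k = mvf P (\<lambda>k. c * x k - mvf T x k) k"
        unfolding mvf_lin PT[OF k] ..
      also have "\<dots> = mvf P w k" using x(1) P by (intro mvf_cong) auto
      also have "\<dots> = mvf (P * Q) (\<lambda>_. 1) k" unfolding w_def using mvf_mult[OF P Q(1) k] by simp
      also have "\<dots> = 1" using Q(2) mvf_one[OF k] unfolding P_def by simp
      finally show "c * mvf P x k - mvf U x k = 1" .
    qed
    show "good n c Cs" unfolding good_def d_def[symmetric]
    proof (intro exI[of _ "\<lambda>j b. x (j*n+b)"] conjI allI impI)
      fix j a assume "j < d" "a < n"
      thus "x (j*n+a) > 0" using xpos idx_lt unfolding N_def by auto
    next
      fix i a assume i: "i < d" and a: "a < n"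
      have "i*n+a < N" unfolding N_def using idx_lt[OF i a] .
      from key[OF this] blk[OF i a, of x]
      show "c * (\<Sum>j<i. mvf (Cs!j) (\<lambda>b. x (j*n+b)) a) + (\<Sum>j\<in>{i..<d}. mvf (Cs!j) (\<lambda>b. x (j*n+b)) a)
          < c * x (i*n+a)" by linarith
    qed
  next
    assume "good n c Cs"
    then obtain ys where ys: "\<forall>j<d. \<forall>a<n. ys j a > 0"
      "\<forall>i<d. \<forall>a<n. c * (\<Sum>j<i. mvf (Cs!j) (ys j) a) + (\<Sum>j\<in>{i..<d}. mvf (Cs!j) (ys j) a) < c * ys i a"
      unfolding good_def d_def by auto
    define y where "y k = ys (k div n) (k mod n)" for k
    have yb: "\<And>j. j < d \<Longrightarrow> mvf (Cs!j) (\<lambda>b. y (j*n+b)) a = mvf (Cs!j) (ys j) a" for a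
      using n Cdim unfolding y_def by (intro mvf_cong) auto
    have v: "\<And>k. k < N \<Longrightarrow> c * mvf P y k - mvf U y k > 0"
    proof -
      fix k assume k: "k < N"
      note kd = kdec[OF k]
      have "c * mvf P y k - mvf U y k = c * mvf P y ((k div n)*n + k mod n) - mvf U y ((k div n)*n + k mod n)"
        using kd by simp
      also have "\<dots> = c * y ((k div n)*n + k mod n) - (c * (\<Sum>j<k div n. mvf (Cs!j) (ys j) (k mod n))
        + (\<Sum>j\<in>{k div n..<d}. mvf (Cs!j) (ys j) (k mod n)))"
        unfolding blk[OF kd[THEN conjunct1] kd[THEN conjunct2, THEN conjunct1]]
        using yb kd by (simp del: div_mult_mod_eq mult_div_mod_eq)
      also have "y ((k div n)*n + k mod n) = ys (k div n) (k mod n)" using kd unfolding y_def by simp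
      finally show "c * mvf P y k - mvf U y k > 0" using ys(2) kd by auto
    qed
    define z where "z k = c * y k - mvf T y k" for k
    have "\<And>k. k < N \<Longrightarrow> z k - mvf L z k = c * mvf P y k - mvf U y k"
    proof -
      fix k assume k: "k < N"
      have "mvf P z k = c * mvf P y k - mvf U y k" unfolding z_def mvf_lin PT[OF k] ..
      thus "z k - mvf L z k = c * mvf P y k - mvf U y k" using Pent[OF k] by simp
    qed
    with tri[OF L Lnn LupA, where x=z and v="\<lambda>k. c * mvf P y k - mvf U y k"] v
    have zv: "\<And>k. k < N \<Longrightarrow> z k \<ge> c * mvf P y k - mvf U y k" by (meson less_imp_le)
    show "real_spectral_radius T < c"
    proof (rule charI[OF T Tnn Npos, of y])
      fix k assume k: "k < N"
      note kd = kdec[OF k]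
      show "y k > 0" using ys(1) kd unfolding y_def by auto
      show "mvf T y k < c * y k" using zv[OF k] v[OF k] unfolding z_def by linarith
    qed
  qed
qed



lemma coef_sum: fixes i d :: nat and c :: real and f :: "nat \<Rightarrow> real" assumes "i \<le> d"
  shows "(\<Sum>j<d. (if j < i then c else 1) * f j) = c * (\<Sum>j<i. f j) + (\<Sum>j\<in>{i..<d}. f j)"
proof -
  have U: "{..<d} = {..<i} \<union> {i..<d}" using assms by auto
  have "(\<Sum>j<d. (if j < i then c else 1) * f j) =
     (\<Sum>j<i. (if j < i then c else 1) * f j) + (\<Sum>j\<in>{i..<d}. (if j < i then c else 1) * f j)"
    unfolding U by (rule sum.union_disjoint) auto
  also have "(\<Sum>j<i. (if j < i then c else 1) * f j) = c * (\<Sum>j<i. f j)"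
    by (simp add: sum_distrib_left)
  also have "(\<Sum>j\<in>{i..<d}. (if j < i then c else 1) * f j) = (\<Sum>j\<in>{i..<d}. f j)"
    by (intro sum.cong) auto
  finally show ?thesis .
qed

lemma good_alt: "good n c Cs \<longleftrightarrow> (\<exists>ys. (\<forall>j<length Cs. \<forall>a<n. ys j a > 0) \<and>
     (\<forall>i<length Cs. \<forall>a<n. (\<Sum>j<length Cs. (if j < i then c else 1) * mvf (Cs!j) (ys j) a) < c * ys i a))"
  unfolding good_def by (simp add: coef_sum less_imp_le_nat)

lemma mvf_nonneg: assumes "nonneg_mat M" "a < dim_row M" "\<And>b. b < dim_col M \<Longrightarrow> y b \<ge> 0"
  shows "mvf M y a \<ge> 0"
  using assms unfolding mvf_def nonneg_mat_def by (intro sum_nonneg mult_nonneg_nonneg) auto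

lemma mvf_mono: assumes "nonneg_mat M" "a < dim_row M" "\<And>b. b < dim_col M \<Longrightarrow> y b \<le> y' b"
  shows "mvf M y a \<le> mvf M y' a"
  using assms unfolding mvf_def nonneg_mat_def by (intro sum_mono mult_left_mono) auto

lemma mvf_scale: "mvf M (\<lambda>b. s * y b) a = s * mvf M y a"
  unfolding mvf_def by (simp add: sum_distrib_left mult_ac)

lemma msl: assumes "\<forall>C\<in>set Bs. C \<in> carrier_mat n n"
  shows "mat_sum_list n Bs \<in> carrier_mat n n \<and>
    (\<forall>a<n. \<forall>b<n. mat_sum_list n Bs $$ (a,b) = (\<Sum>j<length Bs. (Bs!j) $$ (a,b)))"
  using assms
proof (induct Bs)
  case Nil thus ?case unfolding mat_sum_list_def by auto
next
  case (Cons C Bs)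
  have eq: "mat_sum_list n (C # Bs) = C + mat_sum_list n Bs" unfolding mat_sum_list_def by simp
  from Cons have IH: "mat_sum_list n Bs \<in> carrier_mat n n"
    "\<forall>a<n. \<forall>b<n. mat_sum_list n Bs $$ (a,b) = (\<Sum>j<length Bs. (Bs!j) $$ (a,b))" by auto
  have C: "C \<in> carrier_mat n n" using Cons by auto
  show ?case unfolding eq using IH C by (auto simp del: sum.lessThan_Suc simp add: sum.lessThan_Suc_shift)
qed

lemma mvf_msl: assumes "\<forall>C\<in>set Bs. C \<in> carrier_mat n n" and a: "a < n"
  shows "mvf (mat_sum_list n Bs) y a = (\<Sum>j<length Bs. mvf (Bs!j) y a)"
proof -
  note m = msl[OF assms(1)]
  have "mvf (mat_sum_list n Bs) y a = (\<Sum>b<n. (\<Sum>j<length Bs. (Bs!j) $$ (a,b)) * y b)"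
    unfolding mvf_def using m a by (intro sum.cong) auto
  also have "\<dots> = (\<Sum>j<length Bs. \<Sum>b<n. (Bs!j) $$ (a,b) * y b)"
    by (simp add: sum_distrib_right sum.swap[of _ "{..<n}"])
  also have "\<dots> = (\<Sum>j<length Bs. mvf (Bs!j) y a)"
    unfolding mvf_def using assms(1) by (intro sum.cong) auto
  finally show ?thesis .
qed

lemma split_facts:
  assumes sp: "is_splitting n d B Bs" and B: "B \<in> carrier_mat n n" and nn: "nonneg_mat B"
  shows "parts_ok n Bs" "length Bs = d" "d \<ge> 1"
    "\<And>x a. a < n \<Longrightarrow> mvf B x a = (\<Sum>j<d. mvf (Bs!j) x a)"
proof -
  from sp have d: "d \<ge> 1" and len: "length Bs = d"
    and car: "\<forall>p<d. Bs ! p \<in> carrier_mat n n"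
    and sum: "mat_sum_list n Bs = B"
    and dis: "\<forall>p<d. \<forall>q<d. p \<noteq> q \<longrightarrow> (\<forall>i<n. \<forall>j<n. (Bs ! p) $$ (i, j) * (Bs ! q) $$ (i, j) = 0)"
    unfolding is_splitting_def by auto
  show "length Bs = d" "d \<ge> 1" by fact+
  have carS: "\<forall>C\<in>set Bs. C \<in> carrier_mat n n" using car len by (auto simp: in_set_conv_nth)
  note m = msl[OF carS]
  show "\<And>x a. a < n \<Longrightarrow> mvf B x a = (\<Sum>j<d. mvf (Bs!j) x a)"
    using mvf_msl[OF carS] sum len by auto
  have "\<forall>p<d. nonneg_mat (Bs ! p)"
  proof (intro allI impI)
    fix p assume p: "p < d"
    show "nonneg_mat (Bs ! p)" unfolding nonneg_mat_def
    proof (intro allI impI)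
      fix a b assume "a < dim_row (Bs ! p)" "b < dim_col (Bs ! p)"
      hence ab: "a < n" "b < n" using car p by auto
      show "(Bs ! p) $$ (a,b) \<ge> 0"
      proof (rule ccontr)
        assume neg: "\<not> ?thesis"
        have z: "\<And>q. q \<in> {..<d} - {p} \<Longrightarrow> (Bs ! q) $$ (a,b) = 0"
          using dis p ab neg by (metis Diff_iff lessThan_iff mult_eq_0_iff order_refl singletonI)
        have "B $$ (a,b) = (\<Sum>j<d. (Bs!j) $$ (a,b))" using m sum len ab by auto
        also have "\<dots> = (Bs ! p) $$ (a,b) + (\<Sum>q\<in>{..<d} - {p}. (Bs!q) $$ (a,b))"
          using p by (subst sum.remove[of _ p]) auto
        also have "(\<Sum>q\<in>{..<d} - {p}. (Bs!q) $$ (a,b)) = 0" using z by simp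
        finally have "B $$ (a,b) < 0" using neg by simp
        moreover have "B $$ (a,b) \<ge> 0" using nn B ab unfolding nonneg_mat_def by auto
        ultimately show False by simp
      qed
    qed
  qed
  thus "parts_ok n Bs" unfolding parts_ok_def using car len by (auto simp: in_set_conv_nth)
qed

lemma cyc_len[simp]: "length (cyc_shift xs) = length xs"
  unfolding cyc_shift_def by auto

lemma cyc_set[simp]: "set (cyc_shift xs) = set xs"
  unfolding cyc_shift_def by (cases xs rule: rev_cases) auto

lemma cyc_pow_len[simp]: "length ((cyc_shift ^^ k) xs) = length xs"
  by (induct k) auto

lemma cyc_pow_set[simp]: "set ((cyc_shift ^^ k) xs) = set xs"
  by (induct k) auto

lemma cyc_rotate: "cyc_shift xs = rotate (length xs - 1) xs"
proof (cases xs rule: rev_cases)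
  case (snoc ys y)
  have "rotate (length xs - 1) xs = rotate (length ys) (ys @ [y])" using snoc by simp
  also have "\<dots> = [y] @ ys" by (rule rotate_append)
  finally show ?thesis unfolding cyc_shift_def using snoc by simp
qed (simp add: cyc_shift_def)

lemma cyc_pow_rotate: "(cyc_shift ^^ k) xs = rotate (k * (length xs - 1)) xs"
proof (induct k)
  case (Suc k)
  have "(cyc_shift ^^ Suc k) xs = cyc_shift ((cyc_shift ^^ k) xs)" by simp
  also have "\<dots> = rotate (length ((cyc_shift ^^ k) xs) - 1) ((cyc_shift ^^ k) xs)" by (rule cyc_rotate)
  also have "\<dots> = rotate (length xs - 1) (rotate (k * (length xs - 1)) xs)"
    using Suc by simp
  also have "\<dots> = rotate (Suc k * (length xs - 1)) xs" by (simp add: rotate_rotate)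
  finally show ?case .
qed simp

lemma cyc_pow_inv: assumes "r \<le> length xs"
  shows "(cyc_shift ^^ (length xs - r)) ((cyc_shift ^^ r) xs) = xs"
proof -
  let ?d = "length xs"
  have "(cyc_shift ^^ (?d - r)) ((cyc_shift ^^ r) xs) = rotate ((?d - r) * (?d - 1) + r * (?d - 1)) xs"
    unfolding cyc_pow_rotate by (simp add: rotate_rotate)
  also have "(?d - r) * (?d - 1) + r * (?d - 1) = ?d * (?d - 1)" using assms
    by (metis add_mult_distrib le_add_diff_inverse2)
  also have "rotate (?d * (?d - 1)) xs = xs" by (rule rotate_id) simp
  finally show ?thesis .
qed

lemma cyc_nth0: "xs \<noteq> [] \<Longrightarrow> cyc_shift xs ! 0 = xs ! (length xs - 1)"
  unfolding cyc_shift_def by (simp add: last_conv_nth)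

lemma cyc_nthS: "Suc k < length xs \<Longrightarrow> cyc_shift xs ! Suc k = xs ! k"
  unfolding cyc_shift_def by (auto simp: nth_butlast)



lemma parts_nth: "parts_ok n Cs \<Longrightarrow> j < length Cs \<Longrightarrow> Cs ! j \<in> carrier_mat n n \<and> nonneg_mat (Cs ! j)"
  unfolding parts_ok_def by auto

lemma z_nonneg: assumes "parts_ok n Cs" "j < length Cs" "a < n" "\<And>b. b < n \<Longrightarrow> y b \<ge> 0"
  shows "mvf (Cs ! j) y a \<ge> 0"
  using parts_nth[OF assms(1,2)] assms(3,4) by (intro mvf_nonneg) auto

lemma good_shift:
  assumes n: "n > 0" and len: "length Cs \<ge> 1" and c: "c > 0" and ok: "parts_ok n Cs"
    and g: "good n c Cs"
  shows "good n c (cyc_shift Cs)"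
proof -
  obtain d0 where d: "length Cs = Suc d0" using len by (cases "length Cs") auto
  from g[unfolded good_alt d] obtain ys where pos: "\<forall>j<Suc d0. \<forall>a<n. ys j a > 0"
    and ineq: "\<forall>i<Suc d0. \<forall>a<n. (\<Sum>j<Suc d0. (if j < i then c else 1) * mvf (Cs!j) (ys j) a) < c * ys i a"
    by auto
  define ys' where "ys' k = (if k = 0 then (\<lambda>a. (1/c) * ys d0 a) else ys (k - 1))" for k
  have ne: "Cs \<noteq> []" using d by auto
  have z0: "\<And>a. mvf (cyc_shift Cs ! 0) (ys' 0) a = (1/c) * mvf (Cs ! d0) (ys d0) a"
    unfolding cyc_nth0[OF ne] d ys'_def using mvf_scale[of "Cs ! d0" "1/c" "ys d0"] by simp
  have zS: "\<And>k a. k < d0 \<Longrightarrow> mvf (cyc_shift Cs ! Suc k) (ys' (Suc k)) a = mvf (Cs ! k) (ys k) a"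
  proof -
    fix k a assume "k < d0"
    hence "cyc_shift Cs ! Suc k = Cs ! k" using cyc_nthS[of k Cs] d by simp
    thus "mvf (cyc_shift Cs ! Suc k) (ys' (Suc k)) a = mvf (Cs ! k) (ys k) a" unfolding ys'_def by simp
  qed
  show ?thesis unfolding good_alt cyc_len d
  proof (intro exI[of _ ys'] conjI allI impI)
    fix j a assume j: "j < Suc d0" and a: "a < n"
    show "ys' j a > 0" using pos j a c unfolding ys'_def by auto
  next
    fix i a assume i: "i < Suc d0" and a: "a < n"
    define Z where "Z j = mvf (Cs ! j) (ys j) a" for j
    have sh: "(\<Sum>k<Suc d0. (if k < i then c else 1) * mvf (cyc_shift Cs ! k) (ys' k) a) =
        (if 0 < i then c else 1) * ((1/c) * Z d0) + (\<Sum>j<d0. (if Suc j < i then c else 1) * Z j)"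
      unfolding sum.lessThan_Suc_shift z0 Z_def using zS by simp
    show "(\<Sum>k<Suc d0. (if k < i then c else 1) * mvf (cyc_shift Cs ! k) (ys' k) a) < c * ys' i a"
    proof (cases i)
      case 0
      have o: "(\<Sum>j<Suc d0. (if j < d0 then c else 1) * Z j) < c * ys d0 a"
        using ineq a unfolding Z_def by auto
      have "(\<Sum>j<Suc d0. (if j < d0 then c else 1) * Z j) = c * (\<Sum>j<d0. Z j) + Z d0"
        by (simp add: sum_distrib_left)
      with o have "c * ((1/c) * Z d0 + (\<Sum>j<d0. Z j)) < c * ys d0 a"
        using c by (simp add: algebra_simps)
      hence "(1/c) * Z d0 + (\<Sum>j<d0. Z j) < ys d0 a" using c mult_less_cancel_left_pos by blast
      thus ?thesis unfolding sh using 0 c unfolding ys'_def by simp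
    next
      case (Suc i0)
      have i0: "i0 < d0" using i Suc by simp
      have o: "(\<Sum>j<Suc d0. (if j < i0 then c else 1) * Z j) < c * ys i0 a"
        using ineq a i0 unfolding Z_def by auto
      have nd: "\<not> d0 < i0" using i0 by simp
      have e1: "(\<Sum>j<Suc d0. (if j < i0 then c else 1) * Z j) = (\<Sum>j<d0. (if j < i0 then c else 1) * Z j) + Z d0"
        using nd by simp
      have e2: "(if 0 < i then c else 1) * ((1/c) * Z d0) = Z d0" using Suc c by simp
      have e3: "(\<Sum>j<d0. (if Suc j < i then c else 1) * Z j) = (\<Sum>j<d0. (if j < i0 then c else 1) * Z j)"
        using Suc by simp
      have "(\<Sum>k<Suc d0. (if k < i then c else 1) * mvf (cyc_shift Cs ! k) (ys' k) a) < c * ys i0 a"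
        unfolding sh e2 e3 using o e1 by linarith
      thus ?thesis using Suc unfolding ys'_def by simp
    qed
  qed
qed

lemma good_shift_pow:
  assumes n: "n > 0" and len: "length Cs \<ge> 1" and c: "c > 0" and ok: "parts_ok n Cs"
    and g: "good n c Cs"
  shows "good n c ((cyc_shift ^^ k) Cs)"
proof (induct k)
  case (Suc k)
  have "parts_ok n ((cyc_shift ^^ k) Cs)" using ok unfolding parts_ok_def by simp
  from good_shift[OF n _ c this Suc] len show ?case by simp
qed (use g in simp)

lemma rho_eq_from_lt:
  fixes a b :: real
  assumes "a \<ge> 0" "b \<ge> 0" "\<And>c. c > 0 \<Longrightarrow> a < c \<longleftrightarrow> b < c"
  shows "a = b"
proof (rule ccontr)
  assume "a \<noteq> b"
  hence "a < b \<or> b < a" by auto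
  thus False
  proof
    assume ab: "a < b"
    have "a < (a+b)/2 \<longleftrightarrow> b < (a+b)/2" using assms(1) ab by (intro assms(3)) auto
    with ab show False by auto
  next
    assume ab: "b < a"
    have "a < (a+b)/2 \<longleftrightarrow> b < (a+b)/2" using assms(2) ab by (intro assms(3)) auto
    with ab show False by auto
  qed
qed

lemma iter_carrier: assumes n: "n > 0" and ok: "parts_ok n Cs" and d: "length Cs \<ge> 1"
  shows "iteration_matrix n Cs \<in> carrier_mat (length Cs * n) (length Cs * n)"
proof -
  from TC_setup[OF n ok d] obtain Q where "Q \<in> carrier_mat (length Cs * n) (length Cs * n)"
    "iteration_matrix n Cs = Q * block_U n Cs" by blast
  with block_facts(2)[OF n ok] show ?thesis by auto
qed

lemma rhoT_nonneg: assumes n: "n > 0" and ok: "parts_ok n Cs" and d: "length Cs \<ge> 1"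
  shows "real_spectral_radius (iteration_matrix n Cs) \<ge> 0"
  by (rule rho_nonneg[OF iter_carrier[OF n ok d]]) (use n d in auto)

lemma rho_shift_eq:
  assumes n: "n > 0" and ok: "parts_ok n Cs" and d: "length Cs \<ge> 1" and r: "r \<le> length Cs"
  shows "real_spectral_radius (iteration_matrix n ((cyc_shift ^^ r) Cs)) =
         real_spectral_radius (iteration_matrix n Cs)"
proof (rule rho_eq_from_lt)
  have ok': "parts_ok n ((cyc_shift ^^ r) Cs)" using ok unfolding parts_ok_def by simp
  have d': "length ((cyc_shift ^^ r) Cs) \<ge> 1" using d by simp
  show "real_spectral_radius (iteration_matrix n ((cyc_shift ^^ r) Cs)) \<ge> 0" by (rule rhoT_nonneg[OF n ok' d'])
  show "real_spectral_radius (iteration_matrix n Cs) \<ge> 0" by (rule rhoT_nonneg[OF n ok d])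
  fix c :: real assume c: "c > 0"
  show "real_spectral_radius (iteration_matrix n ((cyc_shift ^^ r) Cs)) < c \<longleftrightarrow>
        real_spectral_radius (iteration_matrix n Cs) < c"
    unfolding TC[OF n ok' d' c] TC[OF n ok d c]
  proof
    assume "good n c ((cyc_shift ^^ r) Cs)"
    from good_shift_pow[OF n d' c ok' this, of "length Cs - r"]
    show "good n c Cs" using cyc_pow_inv[OF r] by simp
  next
    assume "good n c Cs"
    from good_shift_pow[OF n d c ok this] show "good n c ((cyc_shift ^^ r) Cs)" .
  qed
qed



lemma G1:
  assumes ok: "parts_ok n Cs" and len: "length Cs = d"
    and sid: "\<And>x a. a < n \<Longrightarrow> mvf A x a = (\<Sum>j<d. mvf (Cs!j) x a)"
    and c1: "c \<le> 1"
    and xpos: "\<forall>a<n. x a > 0" and xin: "\<forall>a<n. mvf A x a < c * x a"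
  shows "good n c Cs"
  unfolding good_alt len
proof (intro exI[of _ "\<lambda>_. x"] conjI allI impI)
  fix j a assume "j < d" "a < n" thus "x a > 0" using xpos by auto
next
  fix i a assume i: "i < d" and a: "a < n"
  have "(\<Sum>j<d. (if j < i then c else 1) * mvf (Cs!j) x a) \<le> (\<Sum>j<d. mvf (Cs!j) x a)"
  proof (rule sum_mono)
    fix j assume j: "j \<in> {..<d}"
    have xnn: "\<And>b. b < n \<Longrightarrow> x b \<ge> 0" using xpos by (simp add: less_imp_le)
    have m0: "mvf (Cs!j) x a \<ge> 0" using z_nonneg[OF ok _ a xnn] j len by auto
    have "c * mvf (Cs!j) x a \<le> 1 * mvf (Cs!j) x a" by (rule mult_right_mono[OF c1 m0])
    thus "(if j < i then c else 1) * mvf (Cs!j) x a \<le> mvf (Cs!j) x a" by simp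
  qed
  also have "\<dots> = mvf A x a" using sid[OF a] by simp
  also have "\<dots> < c * x a" using xin a by auto
  finally show "(\<Sum>j<d. (if j < i then c else 1) * mvf (Cs!j) x a) < c * x a" .
qed

lemma G2:
  assumes ok: "parts_ok n Cs" and len: "length Cs = d" and d: "d \<ge> 1"
    and sid: "\<And>x a. a < n \<Longrightarrow> mvf A x a = (\<Sum>j<d. mvf (Cs!j) x a)"
    and c1: "c \<ge> 1" and g: "good n c Cs"
  shows "\<exists>x. (\<forall>a<n. x a > 0) \<and> (\<forall>a<n. mvf A x a < c * x a)"
proof -
  from g[unfolded good_alt len] obtain ys where pos: "\<forall>j<d. \<forall>a<n. ys j a > 0"
    and ineq: "\<forall>i<d. \<forall>a<n. (\<Sum>j<d. (if j < i then c else 1) * mvf (Cs!j) (ys j) a) < c * ys i a"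
    by auto
  define x where "x a = Min ((\<lambda>j. ys j a) ` {..<d})" for a
  have fin: "\<And>a. finite ((\<lambda>j. ys j a) ` {..<d})" by auto
  have ne: "\<And>a. (\<lambda>j. ys j a) ` {..<d} \<noteq> {}" using d by (auto simp: lessThan_empty_iff)
  have xle: "\<And>a j. j < d \<Longrightarrow> x a \<le> ys j a" unfolding x_def using fin by auto
  have xin: "\<And>a. \<exists>i<d. x a = ys i a" unfolding x_def using Min_in[OF fin ne] by auto
  show ?thesis
  proof (intro exI[of _ x] conjI allI impI)
    fix a assume a: "a < n"
    from xin[of a] obtain i where i: "i < d" "x a = ys i a" by auto
    thus "x a > 0" using pos a by auto
    have "mvf A x a = (\<Sum>j<d. mvf (Cs!j) x a)" using sid[OF a] .
    also have "\<dots> \<le> (\<Sum>j<d. mvf (Cs!j) (ys j) a)"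
    proof (rule sum_mono)
      fix j assume j: "j \<in> {..<d}"
      from parts_nth[OF ok, of j] j len have "Cs ! j \<in> carrier_mat n n" "nonneg_mat (Cs ! j)" by auto
      thus "mvf (Cs!j) x a \<le> mvf (Cs!j) (ys j) a" using xle j a by (intro mvf_mono) auto
    qed
    also have "\<dots> \<le> (\<Sum>j<d. (if j < i then c else 1) * mvf (Cs!j) (ys j) a)"
    proof (rule sum_mono)
      fix j assume j: "j \<in> {..<d}"
      have ynn: "\<And>b. b < n \<Longrightarrow> ys j b \<ge> 0" using pos j by (simp add: less_imp_le)
      have m0: "mvf (Cs!j) (ys j) a \<ge> 0" using z_nonneg[OF ok _ a ynn] j len by auto
      have "1 * mvf (Cs!j) (ys j) a \<le> c * mvf (Cs!j) (ys j) a" by (rule mult_right_mono[OF c1 m0])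
      thus "mvf (Cs!j) (ys j) a \<le> (if j < i then c else 1) * mvf (Cs!j) (ys j) a" by simp
    qed
    also have "\<dots> < c * ys i a" using ineq i a by auto
    finally show "mvf A x a < c * x a" using i by simp
  qed
qed

lemma G3:
  assumes ok: "parts_ok n Cs" and len: "length Cs = d" and d: "d \<ge> 1"
    and sid: "\<And>x a. a < n \<Longrightarrow> mvf A x a = (\<Sum>j<d. mvf (Cs!j) x a)"
    and c1: "c \<ge> 1"
    and xpos: "\<forall>a<n. x a > 0" and xin: "\<forall>a<n. mvf A x a < root d c * x a"
  shows "good n c Cs"
proof -
  define \<beta> where "\<beta> = root d c"
  have b1: "\<beta> \<ge> 1" unfolding \<beta>_def using c1 d by (simp add: real_root_ge_1_iff)
  have bd: "\<beta> ^ d = c" unfolding \<beta>_def using c1 d by (simp add: real_root_pow_pos2)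
  show ?thesis unfolding good_alt len
  proof (intro exI[of _ "\<lambda>j b. \<beta> ^ j * x b"] conjI allI impI)
    fix j a assume "j < d" "a < n" thus "\<beta> ^ j * x a > 0" using xpos b1 by auto
  next
    fix i a assume i: "i < d" and a: "a < n"
    define W where "W j = mvf (Cs!j) x a" for j
    have xnn: "\<And>b. b < n \<Longrightarrow> x b \<ge> 0" using xpos by (simp add: less_imp_le)
    have W0: "\<And>j. j < d \<Longrightarrow> W j \<ge> 0" unfolding W_def
      using z_nonneg[OF ok _ a xnn] len by auto
    have "(\<Sum>j<d. (if j < i then c else 1) * mvf (Cs!j) (\<lambda>b. \<beta> ^ j * x b) a)
        = (\<Sum>j<d. ((if j < i then c else 1) * \<beta> ^ j) * W j)"
      unfolding W_def mvf_scale by (simp add: mult_ac)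
    also have "\<dots> \<le> (\<Sum>j<d. \<beta> ^ (i + d - 1) * W j)"
    proof (rule sum_mono)
      fix j assume j: "j \<in> {..<d}"
      have "(if j < i then c else 1) * \<beta> ^ j \<le> \<beta> ^ (i + d - 1)"
      proof (cases "j < i")
        case True
        have "c * \<beta> ^ j = \<beta> ^ (d + j)" using bd by (simp add: power_add)
        also have "\<dots> \<le> \<beta> ^ (i + d - 1)" using True b1 by (intro power_increasing) auto
        finally show ?thesis using True by simp
      next
        case False
        have "\<beta> ^ j \<le> \<beta> ^ (i + d - 1)" using j b1 by (intro power_increasing) auto
        thus ?thesis using False by simp
      qed
      thus "((if j < i then c else 1) * \<beta> ^ j) * W j \<le> \<beta> ^ (i + d - 1) * W j"
        using W0 j by (intro mult_right_mono) auto
    qed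
    also have "\<dots> = \<beta> ^ (i + d - 1) * mvf A x a" unfolding W_def sid[OF a]
      by (simp add: sum_distrib_left)
    also have "\<dots> < \<beta> ^ (i + d - 1) * (\<beta> * x a)" using xin a b1 unfolding \<beta>_def by auto
    also have "\<dots> = c * (\<beta> ^ i * x a)"
    proof -
      obtain d' where d': "d = Suc d'" using d by (cases d) auto
      have "\<beta> ^ (i + d - 1) * \<beta> = \<beta> ^ (i + d)" unfolding d' by (simp add: power_Suc2)
      also have "\<dots> = c * \<beta> ^ i" using bd by (simp add: power_add)
      finally show ?thesis by (simp add: mult_ac)
    qed
    finally show "(\<Sum>j<d. (if j < i then c else 1) * mvf (Cs!j) (\<lambda>b. \<beta> ^ j * x b) a) < c * (\<beta> ^ i * x a)" .
  qed
qed



lemma refine_le1: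
  assumes n: "n > 0" and ok: "parts_ok n C" and ok': "parts_ok n C'"
    and len: "length C = Suc d0" and len': "length C' = Suc (Suc d0)"
    and hI: "\<forall>p<d0. C' ! p = C ! p"
    and hII: "\<And>y a. a < n \<Longrightarrow> mvf (C ! d0) y a = mvf (C' ! d0) y a + mvf (C' ! Suc d0) y a"
    and c1: "c \<le> 1" and g: "good n c C"
  shows "good n c C'"
proof -
  from g[unfolded good_alt len] obtain ys where pos: "\<forall>j<Suc d0. \<forall>a<n. ys j a > 0"
    and ineq: "\<forall>i<Suc d0. \<forall>a<n. (\<Sum>j<Suc d0. (if j < i then c else 1) * mvf (C!j) (ys j) a) < c * ys i a"
    by auto
  define ys' where "ys' j = ys (min j d0)" for j
  show ?thesis unfolding good_alt len'
  proof (intro exI[of _ ys'] conjI allI impI)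
    fix j a assume "j < Suc (Suc d0)" "a < n" thus "ys' j a > 0" using pos unfolding ys'_def by auto
  next
    fix i a assume i: "i < Suc (Suc d0)" and a: "a < n"
    define Z where "Z j = mvf (C ! j) (ys j) a" for j
    define Z' where "Z' j = mvf (C' ! j) (ys' j) a" for j
    have ZZ: "\<And>j. j < d0 \<Longrightarrow> Z' j = Z j" unfolding Z_def Z'_def ys'_def using hI by auto
    have Zs: "Z' d0 + Z' (Suc d0) = Z d0" unfolding Z_def Z'_def ys'_def using hII[OF a] by simp
    have ynn: "\<And>j b. b < n \<Longrightarrow> ys' j b \<ge> 0" using pos unfolding ys'_def
      by (simp add: less_imp_le)
    have Z'0: "Z' d0 \<ge> 0" unfolding Z'_def using z_nonneg[OF ok' _ a ynn] len' by auto
    have split: "(\<Sum>j<Suc (Suc d0). (if j < i then c else 1) * Z' j) =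
       (\<Sum>j<d0. (if j < i then c else 1) * Z j) + (if d0 < i then c else 1) * Z' d0
         + (if Suc d0 < i then c else 1) * Z' (Suc d0)"
      using ZZ by simp
    show "(\<Sum>j<Suc (Suc d0). (if j < i then c else 1) * mvf (C' ! j) (ys' j) a) < c * ys' i a"
    proof (cases "i \<le> d0")
      case True
      have o: "(\<Sum>j<Suc d0. (if j < i then c else 1) * Z j) < c * ys i a"
        using ineq True a unfolding Z_def by auto
      have "(\<Sum>j<Suc d0. (if j < i then c else 1) * Z j) = (\<Sum>j<d0. (if j < i then c else 1) * Z j) + Z d0"
        using True by simp
      moreover have "(\<Sum>j<Suc (Suc d0). (if j < i then c else 1) * Z' j) =
          (\<Sum>j<d0. (if j < i then c else 1) * Z j) + Z d0"
        unfolding split using True Zs by simp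
      ultimately show ?thesis using o True unfolding Z'_def ys'_def by simp
    next
      case False
      hence iS: "i = Suc d0" using i by simp
      have o: "(\<Sum>j<Suc d0. (if j < d0 then c else 1) * Z j) < c * ys d0 a"
        using ineq a unfolding Z_def by auto
      have e: "(\<Sum>j<Suc d0. (if j < d0 then c else 1) * Z j) = (\<Sum>j<d0. (if j < i then c else 1) * Z j) + Z d0"
        using iS by simp
      have "c * Z' d0 \<le> 1 * Z' d0" by (rule mult_right_mono[OF c1 Z'0])
      hence "(\<Sum>j<Suc (Suc d0). (if j < i then c else 1) * Z' j) \<le>
          (\<Sum>j<d0. (if j < i then c else 1) * Z j) + Z d0"
        unfolding split using iS Zs by simp
      hence "(\<Sum>j<Suc (Suc d0). (if j < i then c else 1) * Z' j) < c * ys d0 a" using o e by linarith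
      thus ?thesis using iS unfolding Z'_def ys'_def by simp
    qed
  qed
qed

lemma refine_ge1:
  assumes n: "n > 0" and ok: "parts_ok n C" and ok': "parts_ok n C'"
    and len: "length C = Suc d0" and len': "length C' = Suc (Suc d0)"
    and hI: "\<forall>p<d0. C' ! p = C ! p"
    and hII: "\<And>y a. a < n \<Longrightarrow> mvf (C ! d0) y a = mvf (C' ! d0) y a + mvf (C' ! Suc d0) y a"
    and c1: "c \<ge> 1" and g: "good n c C'"
  shows "good n c C"
proof -
  from g[unfolded good_alt len'] obtain ys' where pos: "\<forall>j<Suc (Suc d0). \<forall>a<n. ys' j a > 0"
    and ineq: "\<forall>i<Suc (Suc d0). \<forall>a<n. (\<Sum>j<Suc (Suc d0). (if j < i then c else 1) * mvf (C'!j) (ys' j) a) < c * ys' i a"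
    by auto
  define ys where "ys j = (if j < d0 then ys' j else (\<lambda>a. min (ys' d0 a) (ys' (Suc d0) a)))" for j
  have Cd0: "C' ! d0 \<in> carrier_mat n n \<and> nonneg_mat (C' ! d0)" using parts_nth[OF ok'] len' by auto
  have Cd1: "C' ! Suc d0 \<in> carrier_mat n n \<and> nonneg_mat (C' ! Suc d0)" using parts_nth[OF ok'] len' by auto
  show ?thesis unfolding good_alt len
  proof (intro exI[of _ ys] conjI allI impI)
    fix j a assume "j < Suc d0" "a < n" thus "ys j a > 0" using pos unfolding ys_def by auto
  next
    fix i a assume i: "i < Suc d0" and a: "a < n"
    define Z where "Z j = mvf (C ! j) (ys j) a" for j
    define Z' where "Z' j = mvf (C' ! j) (ys' j) a" for j
    have ZZ: "\<And>j. j < d0 \<Longrightarrow> Z j = Z' j" unfolding Z_def Z'_def ys_def using hI by auto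
    have Zle: "Z d0 \<le> Z' d0 + Z' (Suc d0)"
    proof -
      have "Z d0 = mvf (C' ! d0) (ys d0) a + mvf (C' ! Suc d0) (ys d0) a" unfolding Z_def using hII[OF a] .
      also have "mvf (C' ! d0) (ys d0) a \<le> Z' d0" unfolding Z'_def ys_def
        using Cd0 a by (intro mvf_mono) auto
      also have "mvf (C' ! Suc d0) (ys d0) a \<le> Z' (Suc d0)" unfolding Z'_def ys_def
        using Cd1 a by (intro mvf_mono) auto
      finally show ?thesis by simp
    qed
    have ynn: "\<And>j b. j < Suc (Suc d0) \<Longrightarrow> b < n \<Longrightarrow> ys' j b \<ge> 0" using pos by (simp add: less_imp_le)
    have Z'0: "Z' d0 \<ge> 0" unfolding Z'_def using z_nonneg[OF ok' _ a, of d0 "ys' d0"] len' ynn by auto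
    have S: "(\<Sum>j<Suc d0. (if j < i then c else 1) * Z j) = (\<Sum>j<d0. (if j < i then c else 1) * Z' j) + Z d0"
      using i ZZ by simp
    have iSS: "i < Suc (Suc d0)" using i by simp
    have o1: "(\<Sum>j<Suc (Suc d0). (if j < i then c else 1) * Z' j) < c * ys' i a"
      using ineq iSS a unfolding Z'_def by blast
    have e1: "(\<Sum>j<Suc (Suc d0). (if j < i then c else 1) * Z' j) =
        (\<Sum>j<d0. (if j < i then c else 1) * Z' j) + Z' d0 + Z' (Suc d0)"
      using i by simp
    have lt1: "(\<Sum>j<Suc d0. (if j < i then c else 1) * Z j) < c * ys' i a"
      using S o1 e1 Zle by linarith
    show "(\<Sum>j<Suc d0. (if j < i then c else 1) * mvf (C ! j) (ys j) a) < c * ys i a"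
    proof (cases "i < d0")
      case True thus ?thesis using lt1 unfolding Z_def ys_def by simp
    next
      case False
      hence iS: "i = d0" using i by simp
      have o2: "(\<Sum>j<Suc (Suc d0). (if j < Suc d0 then c else 1) * Z' j) < c * ys' (Suc d0) a"
        using ineq a unfolding Z'_def by auto
      have e2: "(\<Sum>j<Suc (Suc d0). (if j < Suc d0 then c else 1) * Z' j) =
          (\<Sum>j<d0. (if j < i then c else 1) * Z' j) + c * Z' d0 + Z' (Suc d0)"
        using iS by simp
      have "1 * Z' d0 \<le> c * Z' d0" by (rule mult_right_mono[OF c1 Z'0])
      hence lt2: "(\<Sum>j<Suc d0. (if j < i then c else 1) * Z j) < c * ys' (Suc d0) a"
        using S o2 e2 Zle by linarith
      have "c * ys d0 a = min (c * ys' d0 a) (c * ys' (Suc d0) a)" unfolding ys_def using c1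
        by (simp add: min_def)
      thus ?thesis using lt1 lt2 iS unfolding Z_def by (simp add: min_def)
    qed
  qed
qed



lemma F1:
  assumes n: "n > 0" and A: "A \<in> carrier_mat n n" and nn: "nonneg_mat A"
    and ok: "parts_ok n Cs" and len: "length Cs = k" and k: "k \<ge> 1"
    and sid: "\<And>x a. a < n \<Longrightarrow> mvf A x a = (\<Sum>j<k. mvf (Cs!j) x a)"
    and c0: "c > 0" and c1: "c \<le> 1" and lt: "real_spectral_radius A < c"
  shows "real_spectral_radius (iteration_matrix n Cs) < c"
proof -
  from charD[OF A nn n lt] obtain x where "\<forall>i<n. x i > 0" "\<forall>i<n. mvf A x i < c * x i" by auto
  from G1[OF ok len sid c1 this] have "good n c Cs" .
  thus ?thesis using TC[OF n ok _ c0] len k by simp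
qed

lemma F2:
  assumes n: "n > 0" and A: "A \<in> carrier_mat n n" and nn: "nonneg_mat A"
    and ok: "parts_ok n Cs" and len: "length Cs = k" and k: "k \<ge> 1"
    and sid: "\<And>x a. a < n \<Longrightarrow> mvf A x a = (\<Sum>j<k. mvf (Cs!j) x a)"
    and c1: "c \<ge> 1" and lt: "real_spectral_radius (iteration_matrix n Cs) < c"
  shows "real_spectral_radius A < c"
proof -
  have "good n c Cs" using TC[OF n ok _ _] lt len k c1 by simp
  from G2[OF ok len k sid c1 this] obtain x where "\<forall>a<n. x a > 0" "\<forall>a<n. mvf A x a < c * x a" by auto
  thus ?thesis using charI[OF A nn n] by auto
qed

lemma F3:
  assumes n: "n > 0" and A: "A \<in> carrier_mat n n" and nn: "nonneg_mat A"
    and ok: "parts_ok n Cs" and len: "length Cs = k" and k: "k \<ge> 1"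
    and sid: "\<And>x a. a < n \<Longrightarrow> mvf A x a = (\<Sum>j<k. mvf (Cs!j) x a)"
    and c1: "c \<ge> 1" and lt: "real_spectral_radius A < root k c"
  shows "real_spectral_radius (iteration_matrix n Cs) < c"
proof -
  from charD[OF A nn n lt] obtain x where "\<forall>i<n. x i > 0" "\<forall>i<n. mvf A x i < root k c * x i" by auto
  from G3[OF ok len k sid c1 this] have "good n c Cs" .
  thus ?thesis using TC[OF n ok _ _] len k c1 by simp
qed



theorem theorem3p1:
  fixes n d r s :: nat and BJ :: "real mat" and Bs Bs' :: "real mat list"
  assumes n: "n > 0"
    and BJ: "BJ \<in> carrier_mat n n"
    and nonneg: "nonneg_mat BJ"
    and rho_pos: "real_spectral_radius BJ > 0"
    and d: "d \<ge> 1"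
    and split: "is_splitting n d BJ Bs"
    and split': "is_splitting n (d + 1) BJ Bs'"
    and r: "r \<le> d - 1" and s: "s \<le> d"
    and I: "\<forall>p < d - 1. (cyc_shift ^^ s) Bs' ! p = (cyc_shift ^^ r) Bs ! p"
    and II: "is_splitting n 2 ((cyc_shift ^^ r) Bs ! (d - 1))
               [(cyc_shift ^^ s) Bs' ! (d - 1), (cyc_shift ^^ s) Bs' ! d]"
  shows "(real_spectral_radius BJ < 1 \<longrightarrow>
            real_spectral_radius (iteration_matrix n Bs') \<le> real_spectral_radius (iteration_matrix n Bs) \<and>
            real_spectral_radius (iteration_matrix n Bs) \<le> real_spectral_radius BJ)
       \<and> (real_spectral_radius BJ = 1 \<longrightarrow>
            real_spectral_radius (iteration_matrix n Bs') = 1 \<and>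
            real_spectral_radius (iteration_matrix n Bs) = 1)
       \<and> (real_spectral_radius BJ > 1 \<longrightarrow>
            real_spectral_radius (iteration_matrix n Bs') \<ge> real_spectral_radius (iteration_matrix n Bs) \<and>
            real_spectral_radius (iteration_matrix n Bs) \<ge> real_spectral_radius BJ)"
proof -
  have ok: "parts_ok n Bs" and len: "length Bs = d"
    and sid: "\<And>x a. a < n \<Longrightarrow> mvf BJ x a = (\<Sum>j<d. mvf (Bs!j) x a)"
    using split_facts[OF split BJ nonneg] by auto
  have ok': "parts_ok n Bs'" and len': "length Bs' = d + 1"
    and sid': "\<And>x a. a < n \<Longrightarrow> mvf BJ x a = (\<Sum>j<d+1. mvf (Bs'!j) x a)"
    using split_facts[OF split' BJ nonneg] by auto
  define C where "C = (cyc_shift ^^ r) Bs"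
  define C' where "C' = (cyc_shift ^^ s) Bs'"
  obtain d0 where d0: "d = Suc d0" using d by (cases d) auto
  have lenC: "length C = Suc d0" and lenC': "length C' = Suc (Suc d0)"
    unfolding C_def C'_def using len len' d0 by auto
  have okC: "parts_ok n C" "parts_ok n C'" using ok ok' unfolding C_def C'_def parts_ok_def by auto
  have hI: "\<forall>p<d0. C' ! p = C ! p" using I d0 unfolding C_def C'_def by simp
  have hII: "\<And>y a. a < n \<Longrightarrow> mvf (C ! d0) y a = mvf (C' ! d0) y a + mvf (C' ! Suc d0) y a"
  proof -
    fix y a assume a: "a < n"
    from II have sp2: "mat_sum_list n [C' ! d0, C' ! Suc d0] = C ! d0"
      and car: "\<forall>p<2. [C' ! d0, C' ! Suc d0] ! p \<in> carrier_mat n n"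
      unfolding is_splitting_def C_def C'_def d0 by auto
    have carS: "\<forall>X\<in>set [C' ! d0, C' ! Suc d0]. X \<in> carrier_mat n n"
      using car[rule_format, of 0] car[rule_format, of 1] by auto
    from mvf_msl[OF carS a, of y] sp2
    show "mvf (C ! d0) y a = mvf (C' ! d0) y a + mvf (C' ! Suc d0) y a"
      by (simp add: numeral_2_eq_2)
  qed
  define rA where "rA = real_spectral_radius BJ"
  define t where "t = real_spectral_radius (iteration_matrix n Bs)"
  define t' where "t' = real_spectral_radius (iteration_matrix n Bs')"
  have tC: "real_spectral_radius (iteration_matrix n C) = t"
    unfolding C_def t_def using rho_shift_eq[OF n ok _ , of r] len r d by simp
  have tC': "real_spectral_radius (iteration_matrix n C') = t'"
    unfolding C'_def t'_def using rho_shift_eq[OF n ok' _ , of s] len' s by simp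
  have t0: "t \<ge> 0" unfolding t_def using rhoT_nonneg[OF n ok] len d by simp
  have t'0: "t' \<ge> 0" unfolding t'_def using rhoT_nonneg[OF n ok'] len' by simp
  have rA0: "rA > 0" unfolding rA_def by (rule rho_pos)
  have d1: "d \<ge> 1" by (rule d)
  have d1': "d + 1 \<ge> 1" by simp
  note F1a = F1[OF n BJ nonneg ok len d1 sid, folded rA_def t_def]
  note F1b = F1[OF n BJ nonneg ok' len' d1' sid', folded rA_def t'_def]
  note F2a = F2[OF n BJ nonneg ok len d1 sid, folded rA_def t_def]
  note F2b = F2[OF n BJ nonneg ok' len' d1' sid', folded rA_def t'_def]
  note F3a = F3[OF n BJ nonneg ok len d1 sid, folded rA_def t_def]
  note F3b = F3[OF n BJ nonneg ok' len' d1' sid', folded rA_def t'_def]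
  have F5a: "\<And>c. c > 0 \<Longrightarrow> c \<le> 1 \<Longrightarrow> t < c \<Longrightarrow> t' < c"
  proof -
    fix c :: real assume c: "c > 0" "c \<le> 1" "t < c"
    hence "good n c C" using TC[OF n okC(1) _ c(1)] lenC tC by simp
    from refine_le1[OF n okC lenC lenC' hI hII c(2) this] have "good n c C'" .
    thus "t' < c" using TC[OF n okC(2) _ c(1)] lenC' tC' by simp
  qed
  have F5b: "\<And>c. c \<ge> 1 \<Longrightarrow> t' < c \<Longrightarrow> t < c"
  proof -
    fix c :: real assume c: "c \<ge> 1" "t' < c"
    have c0: "c > 0" using c by simp
    hence "good n c C'" using TC[OF n okC(2) _ c0] lenC' tC' c by simp
    from refine_ge1[OF n okC lenC lenC' hI hII c(1) this] have "good n c C" .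
    thus "t < c" using TC[OF n okC(1) _ c0] lenC tC by simp
  qed
  have b1: "rA < 1 \<longrightarrow> t' \<le> t \<and> t \<le> rA"
  proof
    assume a1: "rA < 1"
    have tle: "t \<le> rA"
    proof (rule ccontr)
      assume "\<not> t \<le> rA"
      define c where "c = min ((rA + t) / 2) 1"
      have "c > 0" "c \<le> 1" "rA < c" "c < t" using rA0 a1 \<open>\<not> t \<le> rA\<close> unfolding c_def by (auto simp: min_def max_def)
      with F1a[of c] show False by auto
    qed
    have "t' \<le> t"
    proof (rule ccontr)
      assume "\<not> t' \<le> t"
      define c where "c = min ((t + t') / 2) 1"
      have "c > 0" "c \<le> 1" "t < c" "c < t'" using t0 a1 tle \<open>\<not> t' \<le> t\<close> unfolding c_def by (auto simp: min_def max_def)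
      with F5a[of c] show False by auto
    qed
    with tle show "t' \<le> t \<and> t \<le> rA" by simp
  qed
  have eq1: "\<And>tt k. (\<And>c. c \<ge> 1 \<Longrightarrow> tt < c \<Longrightarrow> rA < c) \<Longrightarrow>
      (\<And>c. c \<ge> 1 \<Longrightarrow> rA < root k c \<Longrightarrow> tt < c) \<Longrightarrow> k \<ge> 1 \<Longrightarrow> rA = 1 \<Longrightarrow> tt = 1"
  proof -
    fix tt :: real and k :: nat
    assume h2: "\<And>c. c \<ge> 1 \<Longrightarrow> tt < c \<Longrightarrow> rA < c"
      and h3: "\<And>c. c \<ge> 1 \<Longrightarrow> rA < root k c \<Longrightarrow> tt < c" and k: "k \<ge> 1" and r1: "rA = 1"
    have "\<not> tt < 1" using h2[of 1] r1 by auto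
    moreover have "\<not> tt > 1"
    proof
      assume "tt > 1"
      define c where "c = (1 + tt) / 2"
      have c1: "c > 1" "c < tt" using \<open>tt > 1\<close> unfolding c_def by (auto simp: min_def max_def)
      have "root k c > 1" using c1 k by (simp add: real_root_gt_1_iff)
      with h3[of c] c1 r1 show False by auto
    qed
    ultimately show "tt = 1" by auto
  qed
  have b2: "rA = 1 \<longrightarrow> t' = 1 \<and> t = 1"
  proof
    assume r1: "rA = 1"
    have "t = 1" by (rule eq1[OF F2a F3a d1 r1])
    moreover have "t' = 1" by (rule eq1[OF F2b F3b d1' r1])
    ultimately show "t' = 1 \<and> t = 1" by simp
  qed
  have b3: "rA > 1 \<longrightarrow> t' \<ge> t \<and> t \<ge> rA"
  proof
    assume a1: "rA > 1"
    have tge: "t \<ge> rA"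
    proof (rule ccontr)
      assume "\<not> t \<ge> rA"
      define c where "c = max ((rA + t) / 2) 1"
      have "c \<ge> 1" "t < c" "c < rA" using a1 \<open>\<not> t \<ge> rA\<close> unfolding c_def by (auto simp: min_def max_def)
      with F2a[of c] show False by auto
    qed
    have "t' \<ge> t"
    proof (rule ccontr)
      assume "\<not> t' \<ge> t"
      define c where "c = max ((t + t') / 2) 1"
      have "c \<ge> 1" "t' < c" "c < t" using a1 tge \<open>\<not> t' \<ge> t\<close> unfolding c_def by (auto simp: min_def max_def)
      with F5b[of c] show False by auto
    qed
    with tge show "t' \<ge> t \<and> t \<ge> rA" by simp
  qed
  show ?thesis using b1 b2 b3 unfolding rA_def t_def t'_def by blast
qed


end
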